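(* Let $I$ be a proper ideal in $\mathbb{B}_n$, let $Z=(z_1,\dots,z_s)$ be a tuple of distinct Boolean indeterminates, let $m=n-s$, and let $\mathbb{B}_m\subseteq\mathbb{B}_n$ be the subring $\mathbb{F}_2[X\setminus Z]$ generated by the Boolean indeterminates not in $Z$. Assume $F=(f_1,\dots,f_s)$ is a coherently $Z$-separating tuple of Boolean polynomials in $I$ with respect to a term ordering $\sigma$ (i.e. $\operatorname{LT}_\sigma(f_i)=z_i$), and write $f_i=z_i-h_i$ with $h_i\in\mathbb{B}_m$. (a) The reduced Boolean $\sigma$-Gröbner basis of $I$ has the form $\{z_1-\tilde h_1,\dots,z_s-\tilde h_s,g_1,\dots,g_r\}$ with $\tilde h_1,\dots,\tilde h_s,g_1,\dots,g_r\in\mathbb{B}_m$. (b) The $\mathbb{F}_2$-algebra homomorphism $\Phi:\mathbb{B}_n/I\to\mathbb{B}_m/(I\cap\mathbb{B}_m)$ given by $\Phi(x_i+I)=x_i+(I\cap\mathbb{B}_m)$ for $x_i\notin Z$ and $\Phi(x_i+I)=h_j+(I\cap\mathbb{B}_m)$ for $x_i=z_j\in Z$ is well defined and is an isomorphism of $\mathbb{F}_2$-algebras. (c) For every elimination ordering $\tau$ for $Z$, we have $\langle z_1,\dots,z_s\rangle\subseteq\operatorname{LT}_\tau(I)$.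
   Context: $P=\mathbb{F}_2[X_1,\dots,X_n]$, $\mathbb{I}_n=\langle X_1^2-X_1,\dots,X_n^2-X_n\rangle$, $\mathbb{B}_n=P/\mathbb{I}_n$, $x_i=X_i+\mathbb{I}_n$, $X=(x_1,\dots,x_n)$. Every $f\in\mathbb{B}_n$ has a unique representative $F\in P$ that is a sum of square-free terms (canonical representative); $\operatorname{Supp}(f)=\{t+\mathbb{I}_n: t\in\operatorname{Supp}(F)\}$; for a term ordering $\sigma$ on $P$, $\operatorname{LT}_\sigma(f)=\operatorname{LT}_\sigma(F)+\mathbb{I}_n$ and $\operatorname{LT}_\sigma(I)=\langle\operatorname{LT}_\sigma(f): f\in I\rangle$. A Boolean $\sigma$-Gröbner basis of $I$ is a finite $G\subseteq I$ with $\langle\operatorname{LT}_\sigma(g):g\in G\rangle=\operatorname{LT}_\sigma(I)$; it is reduced if it is minimal, and for each $g\in G$ no term of $\operatorname{Supp}(g)$ other than $\operatorname{LT}_\sigma(g)$ lies in $\operatorname{LT}_\sigma(I)$ (over $\mathbb{F}_2$ all elements are monic). A tuple $(f_1,\dots,f_s)$ of Boolean polynomials in $I$ is $Z$-separating if there is a term ordering $\sigma$ with $\operatorname{LT}_\sigma(f_i)=z_i$ for all $i$; it is coherently $Z$-separating if moreover, for all $i\ne j$, no term in $\operatorname{Supp}(f_i)$ is divisible by $z_j$. An elimination ordering for $Z$ is a term ordering in which every term divisible by some $z_i$ is larger than every term not divisible by any $z_i$. *)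

theory Defs
  imports Main
begin

text \<open>Boolean polynomials in B_n = F_2[X_0..X_{n-1}]/(X_i^2 - X_i) are represented by their
 support: a finite set of square-free terms, each term being a subset of the variable
 indices {..<n}. Addition is symmetric difference; multiplication is computed on
 square-free terms (t * u = t Un u) with coefficients mod 2.\<close>

type_synonym bterm = "nat set"
type_synonym bpoly = "nat set set"

definition bpolys :: "nat \<Rightarrow> bpoly set" where
  "bpolys n = {f. f \<subseteq> Pow {..<n}}"

definition bzero :: bpoly where "bzero = {}"
definition bone :: bpoly where "bone = {{}}"
definition bvar :: "nat \<Rightarrow> bpoly" where "bvar i = {{i}}"

definition badd :: "bpoly \<Rightarrow> bpoly \<Rightarrow> bpoly" where
  "badd f g = (f - g) \<union> (g - f)"

definition bmul :: "bpoly \<Rightarrow> bpoly \<Rightarrow> bpoly" where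
  "bmul f g = {t. odd (card {(a, b). a \<in> f \<and> b \<in> g \<and> a \<union> b = t})}"

definition bprod_list :: "bpoly list \<Rightarrow> bpoly" where
  "bprod_list ps = foldr bmul ps bone"

definition bsum :: "'a set \<Rightarrow> ('a \<Rightarrow> bpoly) \<Rightarrow> bpoly" where
  "bsum A g = {u. odd (card {a \<in> A. u \<in> g a})}"

definition bsubst :: "(nat \<Rightarrow> bpoly) \<Rightarrow> bpoly \<Rightarrow> bpoly" where
  "bsubst img f = bsum f (\<lambda>t. bprod_list (map img (sorted_list_of_set t)))"

definition bideal :: "nat \<Rightarrow> bpoly set \<Rightarrow> bool" where
  "bideal n I \<longleftrightarrow> I \<subseteq> bpolys n \<and> bzero \<in> I \<and>
     (\<forall>f\<in>I. \<forall>g\<in>I. badd f g \<in> I) \<and>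
     (\<forall>f\<in>I. \<forall>g\<in>bpolys n. bmul g f \<in> I)"

definition bideal_gen :: "nat \<Rightarrow> bpoly set \<Rightarrow> bpoly set" where
  "bideal_gen n S = \<Inter>{J. bideal n J \<and> S \<subseteq> J}"

definition bmonos :: "nat \<Rightarrow> (nat \<Rightarrow> nat) set" where
  "bmonos n = {\<alpha>. \<forall>i\<ge>n. \<alpha> i = 0}"

definition term_ordering :: "nat \<Rightarrow> ((nat \<Rightarrow> nat) \<Rightarrow> (nat \<Rightarrow> nat) \<Rightarrow> bool) \<Rightarrow> bool" where
  "term_ordering n le \<longleftrightarrow>
     (\<forall>\<alpha>\<in>bmonos n. le \<alpha> \<alpha>) \<and>
     (\<forall>\<alpha>\<in>bmonos n. \<forall>\<beta>\<in>bmonos n. le \<alpha> \<beta> \<and> le \<beta> \<alpha> \<longrightarrow> \<alpha> = \<beta>) \<and>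
     (\<forall>\<alpha>\<in>bmonos n. \<forall>\<beta>\<in>bmonos n. \<forall>\<gamma>\<in>bmonos n. le \<alpha> \<beta> \<and> le \<beta> \<gamma> \<longrightarrow> le \<alpha> \<gamma>) \<and>
     (\<forall>\<alpha>\<in>bmonos n. \<forall>\<beta>\<in>bmonos n. le \<alpha> \<beta> \<or> le \<beta> \<alpha>) \<and>
     (\<forall>\<alpha>\<in>bmonos n. le (\<lambda>_. 0) \<alpha>) \<and>
     (\<forall>\<alpha>\<in>bmonos n. \<forall>\<beta>\<in>bmonos n. \<forall>\<gamma>\<in>bmonos n. le \<alpha> \<beta> \<longrightarrow> le (\<lambda>i. \<alpha> i + \<gamma> i) (\<lambda>i. \<beta> i + \<gamma> i))"

definition sqf :: "bterm \<Rightarrow> (nat \<Rightarrow> nat)" where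
  "sqf t = (\<lambda>i. if i \<in> t then 1 else 0)"

text \<open>Leading term (of the canonical representative), for f nonzero.\<close>
definition bLT :: "((nat \<Rightarrow> nat) \<Rightarrow> (nat \<Rightarrow> nat) \<Rightarrow> bool) \<Rightarrow> bpoly \<Rightarrow> bterm" where
  "bLT le f = (THE t. t \<in> f \<and> (\<forall>u\<in>f. le (sqf u) (sqf t)))"

definition bLT_ideal :: "nat \<Rightarrow> ((nat \<Rightarrow> nat) \<Rightarrow> (nat \<Rightarrow> nat) \<Rightarrow> bool) \<Rightarrow> bpoly set \<Rightarrow> bpoly set" where
  "bLT_ideal n le I = bideal_gen n {{bLT le f} | f. f \<in> I \<and> f \<noteq> bzero}"

definition is_boolean_gb :: "nat \<Rightarrow> ((nat \<Rightarrow> nat) \<Rightarrow> (nat \<Rightarrow> nat) \<Rightarrow> bool) \<Rightarrow> bpoly set \<Rightarrow> bpoly set \<Rightarrow> bool" where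
  "is_boolean_gb n le I G \<longleftrightarrow> finite G \<and> G \<subseteq> I \<and> bzero \<notin> G \<and>
     bideal_gen n {{bLT le g} | g. g \<in> G} = bLT_ideal n le I"

definition is_reduced_boolean_gb :: "nat \<Rightarrow> ((nat \<Rightarrow> nat) \<Rightarrow> (nat \<Rightarrow> nat) \<Rightarrow> bool) \<Rightarrow> bpoly set \<Rightarrow> bpoly set \<Rightarrow> bool" where
  "is_reduced_boolean_gb n le I G \<longleftrightarrow> is_boolean_gb n le I G \<and>
     (\<forall>g\<in>G. {bLT le g} \<notin> bideal_gen n {{bLT le g'} | g'. g' \<in> G - {g}}) \<and>
     (\<forall>g\<in>G. \<forall>t\<in>g. t \<noteq> bLT le g \<longrightarrow> {t} \<notin> bLT_ideal n le I)"

definition coherently_Z_separating ::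
  "nat \<Rightarrow> ((nat \<Rightarrow> nat) \<Rightarrow> (nat \<Rightarrow> nat) \<Rightarrow> bool) \<Rightarrow> bpoly set \<Rightarrow> nat \<Rightarrow> (nat \<Rightarrow> nat) \<Rightarrow> (nat \<Rightarrow> bpoly) \<Rightarrow> bool" where
  "coherently_Z_separating n le I s z f \<longleftrightarrow>
     (\<forall>i<s. f i \<in> I \<and> f i \<noteq> bzero \<and> bLT le (f i) = {z i}) \<and>
     (\<forall>i<s. \<forall>j<s. i \<noteq> j \<longrightarrow> (\<forall>t\<in>f i. z j \<notin> t))"

definition bsubring :: "nat \<Rightarrow> nat set \<Rightarrow> bpoly set" where
  "bsubring n Zs = {f \<in> bpolys n. \<forall>t\<in>f. t \<inter> Zs = {}}"

definition elimination_ordering ::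
  "nat \<Rightarrow> ((nat \<Rightarrow> nat) \<Rightarrow> (nat \<Rightarrow> nat) \<Rightarrow> bool) \<Rightarrow> nat set \<Rightarrow> bool" where
  "elimination_ordering n le Zs \<longleftrightarrow> term_ordering n le \<and>
     (\<forall>\<alpha>\<in>bmonos n. \<forall>\<beta>\<in>bmonos n. (\<exists>z\<in>Zs. \<alpha> z > 0) \<and> (\<forall>z\<in>Zs. \<beta> z = 0)
        \<longrightarrow> le \<beta> \<alpha> \<and> \<beta> \<noteq> \<alpha>)"

end

theory Submission
  imports Defs
begin

definition ev :: "bpoly \<Rightarrow> nat set \<Rightarrow> bool" where
  "ev p x = odd (card {t\<in>p. t \<subseteq> x})"

lemma finite_bmul: "finite p \<Longrightarrow> finite q \<Longrightarrow> finite (bmul p q)"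
proof -
  assume fp: "finite p" and fq: "finite q"
  have "bmul p q \<subseteq> (\<lambda>(a,b). a \<union> b) ` (p \<times> q)"
  proof
    fix t assume "t \<in> bmul p q"
    then have "card {(a, b). a \<in> p \<and> b \<in> q \<and> a \<union> b = t} \<noteq> 0"
      unfolding bmul_def by (auto elim: oddE)
    then have "{(a, b). a \<in> p \<and> b \<in> q \<and> a \<union> b = t} \<noteq> {}" by force
    then obtain a b where "a \<in> p" "b \<in> q" "a \<union> b = t" by blast
    then show "t \<in> (\<lambda>(a,b). a \<union> b) ` (p \<times> q)" by force
  qed
  then show ?thesis using fp fq by (meson finite_SigmaI finite_imageI finite_subset)
qed

lemma bmul_mem: "t \<in> bmul p q \<Longrightarrow> \<exists>a\<in>p. \<exists>b\<in>q. t = a \<union> b"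
proof -
  assume "t \<in> bmul p q"
  then have "card {(a, b). a \<in> p \<and> b \<in> q \<and> a \<union> b = t} \<noteq> 0"
    unfolding bmul_def by (auto elim: oddE)
  then have "{(a, b). a \<in> p \<and> b \<in> q \<and> a \<union> b = t} \<noteq> {}" by force
  then obtain a b where "a \<in> p" "b \<in> q" "a \<union> b = t" by blast
  then show ?thesis by blast
qed

lemma bsum_mem: "u \<in> bsum A g \<Longrightarrow> \<exists>a\<in>A. u \<in> g a"
proof -
  assume "u \<in> bsum A g"
  then have "card {a \<in> A. u \<in> g a} \<noteq> 0" unfolding bsum_def by (auto elim: oddE)
  then have "{a \<in> A. u \<in> g a} \<noteq> {}" by force
  then show ?thesis by blast
qed

lemma finite_bsum: "finite A \<Longrightarrow> \<forall>a\<in>A. finite (g a) \<Longrightarrow> finite (bsum A g)"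
proof -
  assume "finite A" "\<forall>a\<in>A. finite (g a)"
  moreover have "bsum A g \<subseteq> \<Union>(g ` A)" using bsum_mem by fast
  ultimately show ?thesis by (meson finite_UN_I finite_subset)
qed

lemma ev_badd: "finite p \<Longrightarrow> finite q \<Longrightarrow> ev (badd p q) x = (ev p x \<noteq> ev q x)"
proof -
  assume fp: "finite p" and fq: "finite q"
  define P where "P = {t\<in>p. t \<subseteq> x}"
  define Q where "Q = {t\<in>q. t \<subseteq> x}"
  have fP: "finite P" "finite Q" using fp fq P_def Q_def by auto
  have e: "{t\<in>badd p q. t \<subseteq> x} = (P - Q) \<union> (Q - P)"
    unfolding badd_def P_def Q_def by auto
  have c1: "card ((P - Q) \<union> (Q - P)) = card (P - Q) + card (Q - P)"
    by (rule card_Un_disjoint) (use fP in auto)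
  have c2: "card P = card (P - Q) + card (P \<inter> Q)"
  proof -
    have "P = (P - Q) \<union> (P \<inter> Q)" by auto
    then have "card P = card ((P - Q) \<union> (P \<inter> Q))" by simp
    also have "\<dots> = card (P - Q) + card (P \<inter> Q)"
      by (rule card_Un_disjoint) (use fP in auto)
    finally show ?thesis .
  qed
  have c3: "card Q = card (Q - P) + card (P \<inter> Q)"
  proof -
    have "Q = (Q - P) \<union> (P \<inter> Q)" by auto
    then have "card Q = card ((Q - P) \<union> (P \<inter> Q))" by simp
    also have "\<dots> = card (Q - P) + card (P \<inter> Q)"
      by (rule card_Un_disjoint) (use fP in auto)
    finally show ?thesis .
  qed
  show ?thesis unfolding ev_def e c1 using c2 c3 P_def Q_def by auto
qed


lemma ev_bmul: "finite p \<Longrightarrow> finite q \<Longrightarrow> ev (bmul p q) x = (ev p x \<and> ev q x)"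
proof -
  assume fp: "finite p" and fq: "finite q"
  define P where "P = {a\<in>p. a \<subseteq> x}"
  define Q where "Q = {b\<in>q. b \<subseteq> x}"
  define g where "g = (\<lambda>(a::nat set, b::nat set). a \<union> b)"
  define U where "U = g ` (P \<times> Q)"
  define N where "N t = card {(a, b). a \<in> p \<and> b \<in> q \<and> a \<union> b = t}" for t
  have fPQ: "finite (P \<times> Q)" using fp fq P_def Q_def by auto
  have fU: "finite U" using fPQ U_def by auto
  have Nt: "N t = card {pr \<in> P \<times> Q. g pr = t}" if "t \<subseteq> x" for t
  proof -
    have "{(a, b). a \<in> p \<and> b \<in> q \<and> a \<union> b = t} = {pr \<in> P \<times> Q. g pr = t}"
      using that unfolding P_def Q_def g_def by auto
    then show ?thesis unfolding N_def by simp
  qed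
  have e: "{t\<in>bmul p q. t \<subseteq> x} = {t\<in>U. odd (N t)}"
  proof
    show "{t\<in>bmul p q. t \<subseteq> x} \<subseteq> {t\<in>U. odd (N t)}"
    proof
      fix t assume t: "t \<in> {t\<in>bmul p q. t \<subseteq> x}"
      then obtain a b where "a \<in> p" "b \<in> q" "t = a \<union> b" using bmul_mem by blast
      then have "t \<in> U" using t unfolding U_def g_def P_def Q_def by force
      then show "t \<in> {t\<in>U. odd (N t)}" using t unfolding bmul_def N_def by auto
    qed
    show "{t\<in>U. odd (N t)} \<subseteq> {t\<in>bmul p q. t \<subseteq> x}"
      unfolding U_def g_def P_def Q_def bmul_def N_def by auto
  qed
  have s: "(\<Sum>t\<in>U. N t) = card (P \<times> Q)"
  proof -
    have "(\<Sum>t\<in>U. N t) = (\<Sum>t\<in>U. card {pr \<in> P \<times> Q. g pr = t})"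
    proof (rule sum.cong)
      fix t assume "t \<in> U" then have "t \<subseteq> x" unfolding U_def g_def P_def Q_def by auto
      then show "N t = card {pr \<in> P \<times> Q. g pr = t}" by (rule Nt)
    qed simp
    also have "\<dots> = (\<Sum>t\<in>U. \<Sum>pr\<in>{pr. pr \<in> P \<times> Q \<and> g pr = t}. 1)" by simp
    also have "\<dots> = (\<Sum>pr\<in>P \<times> Q. 1)"
      by (rule sum.group) (use fPQ fU U_def in auto)
    finally show ?thesis by simp
  qed
  have "ev (bmul p q) x = odd (card {t\<in>U. odd (N t)})" unfolding ev_def e ..
  also have "\<dots> = odd (sum N U)" using even_sum_iff[OF fU, of N] by simp
  also have "\<dots> = odd (card P * card Q)" using s by (simp add: card_cartesian_product)
  also have "\<dots> = (ev p x \<and> ev q x)" unfolding ev_def P_def Q_def by simp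
  finally show ?thesis .
qed

lemma ev_bsum: "finite A \<Longrightarrow> \<forall>a\<in>A. finite (g a) \<Longrightarrow> ev (bsum A g) x = odd (card {a\<in>A. ev (g a) x})"
proof -
  assume fA: "finite A" and fg: "\<forall>a\<in>A. finite (g a)"
  define U where "U = {u\<in>\<Union>(g ` A). u \<subseteq> x}"
  define c where "c u = card {a\<in>A. u \<in> g a}" for u
  have fU: "finite U" using fA fg U_def by auto
  have e: "{u\<in>bsum A g. u \<subseteq> x} = {u\<in>U. odd (c u)}"
    unfolding U_def c_def using bsum_mem unfolding bsum_def by fastforce
  have c': "c u = (\<Sum>a\<in>A. if u \<in> g a then 1 else 0)" for u
    unfolding c_def using fA by (simp add: sum.inter_filter[symmetric])
  have "sum c U = (\<Sum>a\<in>A. \<Sum>u\<in>U. if u \<in> g a then 1 else 0)"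
    unfolding c' by (rule sum.swap)
  also have "\<dots> = (\<Sum>a\<in>A. card {u\<in>g a. u \<subseteq> x})"
  proof (rule sum.cong)
    fix a assume a: "a \<in> A"
    have "(\<Sum>u\<in>U. if u \<in> g a then 1 else 0) = card {u\<in>U. u \<in> g a}"
      using fU by (simp add: sum.inter_filter[symmetric])
    also have "{u\<in>U. u \<in> g a} = {u\<in>g a. u \<subseteq> x}" using a U_def by auto
    finally show "(\<Sum>u\<in>U. if u \<in> g a then 1 else 0) = card {u\<in>g a. u \<subseteq> x}" .
  qed simp
  finally have s: "sum c U = (\<Sum>a\<in>A. card {u\<in>g a. u \<subseteq> x})" .
  have "ev (bsum A g) x = odd (card {u\<in>U. odd (c u)})" unfolding ev_def e ..
  also have "\<dots> = odd (sum c U)" using even_sum_iff[OF fU, of c] by simp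
  also have "\<dots> = odd (card {a\<in>A. odd (card {u\<in>g a. u \<subseteq> x})})"
    unfolding s using even_sum_iff[OF fA, of "\<lambda>a. card {u\<in>g a. u \<subseteq> x}"] by simp
  finally show ?thesis unfolding ev_def .
qed


lemma ev_single[simp]: "ev {t} x = (t \<subseteq> x)"
proof -
  have "{u\<in>{t}. u \<subseteq> x} = (if t \<subseteq> x then {t} else {})" by auto
  then show ?thesis unfolding ev_def by simp
qed
lemma ev_bone[simp]: "ev bone x" unfolding bone_def by simp
lemma ev_bzero[simp]: "\<not> ev bzero x" unfolding ev_def bzero_def by simp
lemma ev_bvar[simp]: "ev (bvar i) x = (i \<in> x)" unfolding bvar_def by simp

lemma bprod_list_fin_ev:
  "\<forall>p\<in>set ps. finite p \<Longrightarrow> finite (bprod_list ps) \<and> ev (bprod_list ps) x = (\<forall>p\<in>set ps. ev p x)"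
proof (induction ps)
  case Nil then show ?case by (simp add: bprod_list_def bone_def)
next
  case (Cons p ps)
  then have "finite (bprod_list ps)" "ev (bprod_list ps) x = (\<forall>p\<in>set ps. ev p x)" by auto
  moreover have "bprod_list (p # ps) = bmul p (bprod_list ps)" by (simp add: bprod_list_def)
  ultimately show ?case using Cons.prems finite_bmul ev_bmul by auto
qed

lemma ev_bsubst:
  assumes "finite p" "\<forall>t\<in>p. finite t \<and> (\<forall>i\<in>t. finite (img i))"
  shows "ev (bsubst img p) x = ev p {i. ev (img i) x}"
proof -
  have fin: "\<forall>t\<in>p. finite (bprod_list (map img (sorted_list_of_set t)))"
    using assms(2) bprod_list_fin_ev by auto
  have "ev (bsubst img p) x = odd (card {t\<in>p. ev (bprod_list (map img (sorted_list_of_set t))) x})"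
    unfolding bsubst_def by (rule ev_bsum[OF assms(1) fin])
  also have "{t\<in>p. ev (bprod_list (map img (sorted_list_of_set t))) x} = {t\<in>p. t \<subseteq> {i. ev (img i) x}}"
  proof -
    have "ev (bprod_list (map img (sorted_list_of_set t))) x = (t \<subseteq> {i. ev (img i) x})" if "t \<in> p" for t
      using bprod_list_fin_ev[of "map img (sorted_list_of_set t)" x] assms(2) that by auto
    then show ?thesis by auto
  qed
  finally show ?thesis unfolding ev_def .
qed

lemma bpolys_finite: "p \<in> bpolys n \<Longrightarrow> finite p"
  unfolding bpolys_def by (meson finite_Pow_iff finite_lessThan finite_subset mem_Collect_eq)

lemma bpolys_term_finite: "p \<in> bpolys n \<Longrightarrow> t \<in> p \<Longrightarrow> finite t"
  unfolding bpolys_def by (meson PowD finite_lessThan finite_subset mem_Collect_eq subsetD)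

lemma bpolys_badd: "p \<in> bpolys n \<Longrightarrow> q \<in> bpolys n \<Longrightarrow> badd p q \<in> bpolys n"
  unfolding bpolys_def badd_def by auto

lemma bpolys_bmul: "p \<in> bpolys n \<Longrightarrow> q \<in> bpolys n \<Longrightarrow> bmul p q \<in> bpolys n"
  unfolding bpolys_def using bmul_mem by fastforce

lemma bpolys_bone: "bone \<in> bpolys n" unfolding bpolys_def bone_def by auto
lemma bpolys_bzero: "bzero \<in> bpolys n" unfolding bpolys_def bzero_def by auto
lemma bpolys_bvar: "i < n \<Longrightarrow> bvar i \<in> bpolys n" unfolding bpolys_def bvar_def by auto
lemma bpolys_single: "t \<subseteq> {..<n} \<Longrightarrow> {t} \<in> bpolys n" unfolding bpolys_def by auto

lemma bpolys_bsum: "\<forall>a\<in>A. g a \<in> bpolys n \<Longrightarrow> bsum A g \<in> bpolys n"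
  unfolding bpolys_def using bsum_mem by fastforce

lemma bpolys_bprod_list: "\<forall>p\<in>set ps. p \<in> bpolys n \<Longrightarrow> bprod_list ps \<in> bpolys n"
  by (induction ps) (auto simp: bprod_list_def bpolys_bone bpolys_bmul)

lemma bpolys_bsubst: "p \<in> bpolys n \<Longrightarrow> \<forall>i<n. img i \<in> bpolys n \<Longrightarrow> bsubst img p \<in> bpolys n"
  unfolding bsubst_def
proof (rule bpolys_bsum, intro ballI bpolys_bprod_list)
  fix t q assume "p \<in> bpolys n" "\<forall>i<n. img i \<in> bpolys n" "t \<in> p" "q \<in> set (map img (sorted_list_of_set t))"
  then show "q \<in> bpolys n" using bpolys_term_finite[of p n t] unfolding bpolys_def by auto
qed

lemma ev_inj:
  assumes p: "p \<in> bpolys n" and q: "q \<in> bpolys n" and e: "\<And>x. x \<subseteq> {..<n} \<Longrightarrow> ev p x = ev q x"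
  shows "p = q"
proof (rule ccontr)
  assume "p \<noteq> q"
  define r where "r = badd p q"
  have rne: "r \<noteq> {}" using \<open>p \<noteq> q\<close> unfolding r_def badd_def by auto
  have rb: "r \<in> bpolys n" using p q bpolys_badd r_def by blast
  have r0: "\<not> ev r x" if "x \<subseteq> {..<n}" for x
    using e[OF that] ev_badd[OF bpolys_finite[OF p] bpolys_finite[OF q]] r_def by simp
  obtain t where t: "t \<in> r" "\<forall>u. u \<in> r \<longrightarrow> card t \<le> card u"
    using rne ex_has_least_nat[of "\<lambda>t. t \<in> r" _ card] by blast
  have tn: "t \<subseteq> {..<n}" using t rb unfolding bpolys_def by auto
  have ft: "finite t" using tn finite_subset by blast
  have "{u\<in>r. u \<subseteq> t} = {t}"
  proof (intro equalityI subsetI)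
    fix u assume u: "u \<in> {u\<in>r. u \<subseteq> t}"
    show "u \<in> {t}"
    proof (rule ccontr)
      assume "u \<notin> {t}"
      then have "u \<subset> t" using u by auto
      then have "card u < card t" using ft psubset_card_mono by blast
      then show False using t u by auto
    qed
  qed (use t in auto)
  then have "ev r t" unfolding ev_def by simp
  then show False using r0 tn by blast
qed

lemma finite_badd[simp]: "finite p \<Longrightarrow> finite q \<Longrightarrow> finite (badd p q)"
  unfolding badd_def by simp

declare finite_bmul[simp]

lemma bpolys_fin[simp]: "p \<in> bpolys n \<Longrightarrow> finite p" by (rule bpolys_finite)

lemma bmul_comm: "p \<in> bpolys n \<Longrightarrow> q \<in> bpolys n \<Longrightarrow> bmul p q = bmul q p"
  by (rule ev_inj[of _ n]) (simp_all add: bpolys_bmul ev_bmul conj_commute)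

lemma bmul_assoc: "p \<in> bpolys n \<Longrightarrow> q \<in> bpolys n \<Longrightarrow> r \<in> bpolys n \<Longrightarrow>
    bmul (bmul p q) r = bmul p (bmul q r)"
  by (rule ev_inj[of _ n]) (simp_all add: bpolys_bmul ev_bmul)

lemma bmul_single: "u \<subseteq> {..<n} \<Longrightarrow> t \<subseteq> {..<n} \<Longrightarrow> bmul {u} {t} = {u \<union> t}"
  by (rule ev_inj[of _ n]) (simp_all add: bpolys_bmul ev_bmul bpolys_single)

lemma bprod_bvar: "set xs \<subseteq> {..<n} \<Longrightarrow> bprod_list (map bvar xs) = {set xs}"
proof (induction xs)
  case Nil then show ?case by (simp add: bprod_list_def bone_def)
next
  case (Cons i xs)
  then have "bprod_list (map bvar (i # xs)) = bmul {{i}} {set xs}"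
    unfolding bprod_list_def by (simp add: bvar_def)
  also have "\<dots> = {{i} \<union> set xs}" using Cons.prems by (intro bmul_single) auto
  finally show ?case by simp
qed

lemma telescope:
  assumes "a \<in> bpolys n" "b \<in> bpolys n" "A \<in> bpolys n" "B \<in> bpolys n"
  shows "badd (bmul a A) (bmul b B) = badd (bmul a (badd A B)) (bmul (badd a b) B)"
  using assms
  by (intro ev_inj[of _ n]) (simp_all add: bpolys_bmul bpolys_badd ev_bmul ev_badd, blast)

lemma bideal_bpolys: "bideal n (bpolys n)"
  unfolding bideal_def using bpolys_bzero bpolys_badd bpolys_bmul by blast

lemma bideal_gen_least: "bideal n J \<Longrightarrow> S \<subseteq> J \<Longrightarrow> bideal_gen n S \<subseteq> J"
  unfolding bideal_gen_def by auto

lemma bideal_gen_sup: "S \<subseteq> bideal_gen n S"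
  unfolding bideal_gen_def by auto

lemma bideal_gen_mono: "S \<subseteq> T \<Longrightarrow> bideal_gen n S \<subseteq> bideal_gen n T"
  unfolding bideal_gen_def by auto

lemma bideal_intro: "J \<subseteq> bpolys n \<Longrightarrow> bzero \<in> J \<Longrightarrow> (\<forall>f\<in>J. \<forall>g\<in>J. badd f g \<in> J) \<Longrightarrow>
   (\<forall>f\<in>J. \<forall>g\<in>bpolys n. bmul g f \<in> J) \<Longrightarrow> bideal n J"
  unfolding bideal_def by blast

lemma bidealD: "bideal n J \<Longrightarrow> J \<subseteq> bpolys n"  "bideal n J \<Longrightarrow> bzero \<in> J"
  "bideal n J \<Longrightarrow> f \<in> J \<Longrightarrow> g \<in> J \<Longrightarrow> badd f g \<in> J"
  "bideal n J \<Longrightarrow> f \<in> J \<Longrightarrow> g \<in> bpolys n \<Longrightarrow> bmul g f \<in> J"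
  unfolding bideal_def by blast+

lemma bideal_gen_ideal: "S \<subseteq> bpolys n \<Longrightarrow> bideal n (bideal_gen n S)"
proof -
  assume S: "S \<subseteq> bpolys n"
  define F where "F = {J. bideal n J \<and> S \<subseteq> J}"
  have ne: "bpolys n \<in> F" using S bideal_bpolys F_def by auto
  have a: "\<Inter> F \<subseteq> bpolys n" using ne by blast
  have b: "bzero \<in> \<Inter> F" unfolding F_def using bidealD(2) by blast
  have c: "\<forall>f\<in>\<Inter> F. \<forall>g\<in>\<Inter> F. badd f g \<in> \<Inter> F"
  proof (intro ballI InterI)
    fix f g J assume "f \<in> \<Inter> F" "g \<in> \<Inter> F" "J \<in> F"
    then have "f \<in> J" "g \<in> J" "bideal n J" unfolding F_def by auto
    then show "badd f g \<in> J" using bidealD(3) by blast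
  qed
  have d: "\<forall>f\<in>\<Inter> F. \<forall>g\<in>bpolys n. bmul g f \<in> \<Inter> F"
  proof (intro ballI InterI)
    fix f g J assume "f \<in> \<Inter> F" "g \<in> bpolys n" "J \<in> F"
    then have "f \<in> J" "g \<in> bpolys n" "bideal n J" unfolding F_def by auto
    then show "bmul g f \<in> J" using bidealD(4) by blast
  qed
  have "bideal n (\<Inter> F)" by (rule bideal_intro[OF a b c d])
  then show ?thesis unfolding bideal_gen_def F_def .
qed

lemma monomial_ideal:
  assumes U: "U \<subseteq> Pow {..<n}" and p: "p \<in> bideal_gen n ((\<lambda>u. {u}) ` U)" and v: "v \<in> p"
  shows "\<exists>u\<in>U. u \<subseteq> v"
proof -
  define J where "J = {p \<in> bpolys n. \<forall>v\<in>p. \<exists>u\<in>U. u \<subseteq> v}"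
  have j1: "J \<subseteq> bpolys n" unfolding J_def by blast
  have j2: "bzero \<in> J" unfolding J_def bzero_def using bpolys_bzero[unfolded bzero_def] by blast
  have j3: "\<forall>f\<in>J. \<forall>g\<in>J. badd f g \<in> J"
  proof (intro ballI)
    fix f g assume "f \<in> J" "g \<in> J"
    then show "badd f g \<in> J" unfolding J_def using bpolys_badd[of f n g] unfolding badd_def by blast
  qed
  have j4: "\<forall>f\<in>J. \<forall>g\<in>bpolys n. bmul g f \<in> J"
  proof (intro ballI)
    fix f g assume f: "f \<in> J" and g: "g \<in> bpolys n"
    have "\<exists>u\<in>U. u \<subseteq> v" if vm: "v \<in> bmul g f" for v
    proof -
      obtain a b where "a \<in> g" "b \<in> f" "v = a \<union> b" using bmul_mem[OF vm] by blast
      then show ?thesis using f unfolding J_def by blast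
    qed
    then show "bmul g f \<in> J" unfolding J_def using f g bpolys_bmul[of g n f] unfolding J_def by blast
  qed
  have "bideal n J" by (rule bideal_intro[OF j1 j2 j3 j4])
  moreover have "(\<lambda>u. {u}) ` U \<subseteq> J"
  proof (rule image_subsetI)
    fix u assume "u \<in> U"
    then have "u \<subseteq> {..<n}" using U by blast
    then have "{u} \<in> bpolys n" by (rule bpolys_single)
    moreover have "\<forall>v\<in>{u}. \<exists>u'\<in>U. u' \<subseteq> v" using \<open>u \<in> U\<close> by blast
    ultimately show "{u} \<in> J" unfolding J_def by simp
  qed
  ultimately have "bideal_gen n ((\<lambda>u. {u}) ` U) \<subseteq> J" by (rule bideal_gen_least)
  then have "p \<in> J" using p by blast
  then have "\<forall>v\<in>p. \<exists>u\<in>U. u \<subseteq> v" unfolding J_def by simp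
  then show ?thesis using v by simp
qed

lemma sqf_bmonos: "t \<subseteq> {..<n} \<Longrightarrow> sqf t \<in> bmonos n"
  unfolding sqf_def bmonos_def by auto

lemma sqf_inj: "sqf t = sqf u \<Longrightarrow> t = u"
proof -
  assume e: "sqf t = sqf u"
  have "i \<in> t \<longleftrightarrow> i \<in> u" for i using fun_cong[OF e, of i] unfolding sqf_def by (auto split: if_splits)
  then show ?thesis by blast
qed

lemma sqf_empty: "sqf {} = (\<lambda>_. 0)" unfolding sqf_def by simp

lemma to_D:
  assumes "term_ordering n le"
  shows "\<forall>\<alpha>\<in>bmonos n. le \<alpha> \<alpha>"
    "\<forall>\<alpha>\<in>bmonos n. \<forall>\<beta>\<in>bmonos n. le \<alpha> \<beta> \<and> le \<beta> \<alpha> \<longrightarrow> \<alpha> = \<beta>"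
    "\<forall>\<alpha>\<in>bmonos n. \<forall>\<beta>\<in>bmonos n. \<forall>\<gamma>\<in>bmonos n. le \<alpha> \<beta> \<and> le \<beta> \<gamma> \<longrightarrow> le \<alpha> \<gamma>"
    "\<forall>\<alpha>\<in>bmonos n. \<forall>\<beta>\<in>bmonos n. le \<alpha> \<beta> \<or> le \<beta> \<alpha>"
    "\<forall>\<alpha>\<in>bmonos n. le (\<lambda>_. 0) \<alpha>"
    "\<forall>\<alpha>\<in>bmonos n. \<forall>\<beta>\<in>bmonos n. \<forall>\<gamma>\<in>bmonos n. le \<alpha> \<beta> \<longrightarrow> le (\<lambda>i. \<alpha> i + \<gamma> i) (\<lambda>i. \<beta> i + \<gamma> i)"
  apply (insert assms[unfolded term_ordering_def])
  apply (elim conjE, assumption)+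
  done

lemma to_refl: "term_ordering n le \<Longrightarrow> t \<subseteq> {..<n} \<Longrightarrow> le (sqf t) (sqf t)"
  using to_D(1) sqf_bmonos by blast

lemma to_antisym: "term_ordering n le \<Longrightarrow> t \<subseteq> {..<n} \<Longrightarrow> u \<subseteq> {..<n} \<Longrightarrow>
   le (sqf t) (sqf u) \<Longrightarrow> le (sqf u) (sqf t) \<Longrightarrow> t = u"
proof -
  assume a: "term_ordering n le" "t \<subseteq> {..<n}" "u \<subseteq> {..<n}" "le (sqf t) (sqf u)" "le (sqf u) (sqf t)"
  have "sqf t \<in> bmonos n" "sqf u \<in> bmonos n" using a sqf_bmonos by auto
  then have "sqf t = sqf u" using to_D(2)[OF a(1)] a(4,5) by blast
  then show ?thesis by (rule sqf_inj)
qed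

lemma to_trans: "term_ordering n le \<Longrightarrow> t \<subseteq> {..<n} \<Longrightarrow> u \<subseteq> {..<n} \<Longrightarrow> v \<subseteq> {..<n} \<Longrightarrow>
   le (sqf t) (sqf u) \<Longrightarrow> le (sqf u) (sqf v) \<Longrightarrow> le (sqf t) (sqf v)"
proof -
  assume a: "term_ordering n le" "t \<subseteq> {..<n}" "u \<subseteq> {..<n}" "v \<subseteq> {..<n}" "le (sqf t) (sqf u)" "le (sqf u) (sqf v)"
  have "sqf t \<in> bmonos n" "sqf u \<in> bmonos n" "sqf v \<in> bmonos n" using a sqf_bmonos by auto
  then show ?thesis using to_D(3)[OF a(1)] a(5,6) by blast
qed

lemma to_total: "term_ordering n le \<Longrightarrow> t \<subseteq> {..<n} \<Longrightarrow> u \<subseteq> {..<n} \<Longrightarrow>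
   le (sqf t) (sqf u) \<or> le (sqf u) (sqf t)"
proof -
  assume a: "term_ordering n le" "t \<subseteq> {..<n}" "u \<subseteq> {..<n}"
  have "sqf t \<in> bmonos n" "sqf u \<in> bmonos n" using a sqf_bmonos by auto
  then show ?thesis using to_D(4)[OF a(1)] by blast
qed

lemma to_zero: "term_ordering n le \<Longrightarrow> t \<subseteq> {..<n} \<Longrightarrow> le (sqf {}) (sqf t)"
proof -
  assume a: "term_ordering n le" "t \<subseteq> {..<n}"
  have "sqf t \<in> bmonos n" using a sqf_bmonos by auto
  then show ?thesis using to_D(5)[OF a(1)] unfolding sqf_empty by blast
qed

lemma to_add: "term_ordering n le \<Longrightarrow> \<alpha> \<in> bmonos n \<Longrightarrow> \<beta> \<in> bmonos n \<Longrightarrow> \<gamma> \<in> bmonos n \<Longrightarrow>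
   le \<alpha> \<beta> \<Longrightarrow> le (\<lambda>i. \<alpha> i + \<gamma> i) (\<lambda>i. \<beta> i + \<gamma> i)"
  using to_D(6) by blast

lemma to_sub: "term_ordering n le \<Longrightarrow> t \<subseteq> u \<Longrightarrow> u \<subseteq> {..<n} \<Longrightarrow> le (sqf t) (sqf u)"
proof -
  assume to: "term_ordering n le" and tu: "t \<subseteq> u" and u: "u \<subseteq> {..<n}"
  have m1: "(\<lambda>_. 0) \<in> bmonos n" unfolding bmonos_def by simp
  have m2: "sqf (u - t) \<in> bmonos n" "sqf t \<in> bmonos n"
    using u tu sqf_bmonos[of "u - t" n] sqf_bmonos[of t n] by auto
  have "le (\<lambda>_. 0) (sqf (u - t))" using to_zero[OF to, of "u - t"] u sqf_empty by auto
  then have "le (\<lambda>i. 0 + sqf t i) (\<lambda>i. sqf (u - t) i + sqf t i)"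
    using to_add[OF to m1 m2(1) m2(2)] by simp
  moreover have "(\<lambda>i. 0 + sqf t i) = sqf t" by simp
  moreover have "(\<lambda>i. sqf (u - t) i + sqf t i) = sqf u" using tu unfolding sqf_def by (intro ext) auto
  ultimately show ?thesis by simp
qed

lemma to_insert: "term_ordering n le \<Longrightarrow> i < n \<Longrightarrow> i \<notin> t \<Longrightarrow> v \<subseteq> {..<n} \<Longrightarrow> t \<subseteq> {..<n} \<Longrightarrow>
   le (sqf v) (sqf t) \<Longrightarrow> le (sqf (insert i v)) (sqf (insert i t))"
proof -
  assume to: "term_ordering n le" and i: "i < n" "i \<notin> t" and v: "v \<subseteq> {..<n}" and t: "t \<subseteq> {..<n}"
    and vt: "le (sqf v) (sqf t)"
  show ?thesis
  proof (cases "i \<in> v")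
    case True
    then have "insert i v = v" by blast
    moreover have "le (sqf t) (sqf (insert i t))"
    proof -
      have "t \<subseteq> insert i t" by blast
      moreover have "insert i t \<subseteq> {..<n}" using t i by auto
      ultimately show ?thesis using to_sub[OF to] by blast
    qed
    ultimately show ?thesis using to_trans[OF to, of v t "insert i t"] v t i vt by auto
  next
    case False
    have m: "sqf v \<in> bmonos n" "sqf t \<in> bmonos n" "sqf {i} \<in> bmonos n"
      using v t i sqf_bmonos[of v n] sqf_bmonos[of t n] sqf_bmonos[of "{i}" n] by auto
    have h: "le (\<lambda>j. sqf v j + sqf {i} j) (\<lambda>j. sqf t j + sqf {i} j)"
      using to_add[of n le "sqf v" "sqf t" "sqf {i}"] to m vt by blast
    have e1: "(\<lambda>j. sqf v j + sqf {i} j) = sqf (insert i v)"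
      unfolding sqf_def by (rule ext) (use False in auto)
    have e2: "(\<lambda>j. sqf t j + sqf {i} j) = sqf (insert i t)"
      unfolding sqf_def by (rule ext) (use i in auto)
    show ?thesis using h unfolding e1 e2 .
  qed
qed

lemma to_max_ex: assumes to: "term_ordering n le" shows "finite g \<Longrightarrow> g \<noteq> {} \<Longrightarrow> g \<subseteq> Pow {..<n} \<Longrightarrow>
   \<exists>t\<in>g. \<forall>u\<in>g. le (sqf u) (sqf t)"
proof (induction g rule: finite_ne_induct)
  case (singleton x) then show ?case using to_refl[OF to, of x] by auto
next
  case (insert x F)
  then obtain t where t: "t \<in> F" "\<forall>u\<in>F. le (sqf u) (sqf t)" by blast
  have x: "x \<subseteq> {..<n}" and tn: "t \<subseteq> {..<n}" using insert.prems t by auto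
  show ?case
  proof (cases "le (sqf x) (sqf t)")
    case True then show ?thesis using t by auto
  next
    case False
    then have xt: "le (sqf t) (sqf x)" using to_total[OF to x tn] by blast
    have "\<forall>u\<in>insert x F. le (sqf u) (sqf x)"
    proof
      fix u assume "u \<in> insert x F"
      then show "le (sqf u) (sqf x)"
      proof
        assume "u = x" then show ?thesis using to_refl[OF to x] by simp
      next
        assume u: "u \<in> F"
        then have un: "u \<subseteq> {..<n}" using insert.prems by auto
        have "le (sqf u) (sqf t)" using t(2) u by blast
        then show ?thesis using to_trans[OF to un tn x _ xt] by blast
      qed
    qed
    then show ?thesis by (intro bexI[of _ x]) auto
  qed
qed

lemma bLT_eq: "term_ordering n le \<Longrightarrow> g \<subseteq> Pow {..<n} \<Longrightarrow> t \<in> g \<Longrightarrow> \<forall>u\<in>g. le (sqf u) (sqf t) \<Longrightarrow>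
   bLT le g = t"
  unfolding bLT_def
proof (rule the_equality)
  assume to: "term_ordering n le" and g: "g \<subseteq> Pow {..<n}" and t: "t \<in> g" "\<forall>u\<in>g. le (sqf u) (sqf t)"
  show "t \<in> g \<and> (\<forall>u\<in>g. le (sqf u) (sqf t))" using t by blast
  fix t' assume t': "t' \<in> g \<and> (\<forall>u\<in>g. le (sqf u) (sqf t'))"
  then show "t' = t" using to_antisym[OF to, of t' t] g t by blast
qed

lemma bLT_props:
  assumes to: "term_ordering n le" and g: "g \<in> bpolys n" and ne: "g \<noteq> bzero"
  shows "bLT le g \<in> g" "\<forall>u\<in>g. le (sqf u) (sqf (bLT le g))" "bLT le g \<subseteq> {..<n}"
proof -
  have gp: "g \<subseteq> Pow {..<n}" using g unfolding bpolys_def by simp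
  obtain t where t: "t \<in> g" "\<forall>u\<in>g. le (sqf u) (sqf t)"
    using to_max_ex[OF to bpolys_finite[OF g] _ gp] ne unfolding bzero_def by blast
  have "bLT le g = t" by (rule bLT_eq[OF to gp t])
  then show "bLT le g \<in> g" "\<forall>u\<in>g. le (sqf u) (sqf (bLT le g))" using t by simp_all
  show "bLT le g \<subseteq> {..<n}" using \<open>bLT le g = t\<close> t(1) gp by blast
qed

locale bset =
  fixes n :: nat and I :: "bpoly set" and le :: "(nat \<Rightarrow> nat) \<Rightarrow> (nat \<Rightarrow> nat) \<Rightarrow> bool"
  assumes ideal: "bideal n I" and proper: "bone \<notin> I" and to: "term_ordering n le"
begin

definition L where "L = {bLT le f | f. f \<in> I \<and> f \<noteq> bzero}"

lemma I_sub: "f \<in> I \<Longrightarrow> f \<in> bpolys n" using bidealD(1)[OF ideal] by blast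

lemma LT_in_L: "f \<in> I \<Longrightarrow> f \<noteq> bzero \<Longrightarrow> bLT le f \<in> L" unfolding L_def by blast

lemma L_E: "t \<in> L \<Longrightarrow> (\<And>f. f \<in> I \<Longrightarrow> f \<noteq> bzero \<Longrightarrow> bLT le f = t \<Longrightarrow> P) \<Longrightarrow> P"
  unfolding L_def by blast

lemma L_sub: "t \<in> L \<Longrightarrow> t \<subseteq> {..<n}"
  by (erule L_E) (use bLT_props(3)[OF to I_sub] in blast)

lemma L_insert:
  assumes t: "t \<in> L" and i: "i < n" "i \<notin> t"
  shows "insert i t \<in> L"
proof -
  obtain f where f: "f \<in> I" "f \<noteq> bzero" "bLT le f = t" using t by (rule L_E)
  have fb: "f \<in> bpolys n" using f I_sub by blast
  have tf: "t \<in> f" and tmax: "\<forall>u\<in>f. le (sqf u) (sqf t)" and tn: "t \<subseteq> {..<n}"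
    using bLT_props[OF to fb f(2)] f(3) by auto
  have fp: "f \<subseteq> Pow {..<n}" using fb unfolding bpolys_def by simp
  define g where "g = bmul (bvar i) f"
  have gI: "g \<in> I" unfolding g_def using bidealD(4)[OF ideal f(1) bpolys_bvar[OF i(1)]] .
  have gb: "g \<in> bpolys n" using gI I_sub by blast
  have itn: "insert i t \<subseteq> {..<n}" using tn i by auto
  have ins_notin: "insert i t \<notin> f"
  proof
    assume "insert i t \<in> f"
    then have "le (sqf (insert i t)) (sqf t)" using tmax by blast
    moreover have "le (sqf t) (sqf (insert i t))" using to_sub[OF to _ itn] by blast
    ultimately have "insert i t = t" using to_antisym[OF to itn tn] by blast
    then show False using i by blast
  qed
  have S: "{(a, b). a \<in> bvar i \<and> b \<in> f \<and> a \<union> b = insert i t} = {({i}, t)}"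
  proof (intro equalityI subsetI)
    fix x assume "x \<in> {(a, b). a \<in> bvar i \<and> b \<in> f \<and> a \<union> b = insert i t}"
    then obtain a b where x: "x = (a, b)" "a = {i}" "b \<in> f" "{i} \<union> b = insert i t"
      unfolding bvar_def by blast
    have "b - {i} = ({i} \<union> b) - {i}" by blast
    also have "\<dots> = insert i t - {i}" using x(4) by simp
    also have "\<dots> = t" using i(2) by simp
    finally have bt: "b - {i} = t" .
    have "b = t \<or> b = insert i t"
    proof (cases "i \<in> b")
      case True then have "b = insert i (b - {i})" by blast
      then show ?thesis using bt by simp
    next
      case False then show ?thesis using bt by simp
    qed
    then have "b = t" using x(3) ins_notin by blast
    then show "x \<in> {({i}, t)}" using x by simp
  next
    fix x assume "x \<in> {({i}, t)}"
    then show "x \<in> {(a, b). a \<in> bvar i \<and> b \<in> f \<and> a \<union> b = insert i t}"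
      using tf unfolding bvar_def by auto
  qed
  have itg: "insert i t \<in> g" unfolding g_def bmul_def mem_Collect_eq S by simp
  have gmax: "\<forall>u\<in>g. le (sqf u) (sqf (insert i t))"
  proof
    fix u assume "u \<in> g"
    then obtain a b where ab: "a \<in> bvar i" "b \<in> f" "u = a \<union> b" unfolding g_def using bmul_mem by blast
    then have u: "u = insert i b" unfolding bvar_def by blast
    have bn: "b \<subseteq> {..<n}" using ab(2) fp by blast
    have "le (sqf b) (sqf t)" using tmax ab(2) by blast
    then show "le (sqf u) (sqf (insert i t))" unfolding u using to_insert[OF to i bn tn] by blast
  qed
  have gp: "g \<subseteq> Pow {..<n}" using gb unfolding bpolys_def by simp
  have e: "bLT le g = insert i t" by (rule bLT_eq[OF to gp itg gmax])
  have gz: "g \<noteq> bzero" using itg unfolding bzero_def by blast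
  have "bLT le g \<in> L" by (rule LT_in_L[OF gI gz])
  then show ?thesis unfolding e .
qed

lemma L_up_aux: "\<forall>t. t \<in> L \<and> t \<subseteq> u \<and> u \<subseteq> {..<n} \<and> card (u - t) = k \<longrightarrow> u \<in> L"
proof (induction k)
  case 0
  show ?case
  proof (intro allI impI)
    fix t assume a: "t \<in> L \<and> t \<subseteq> u \<and> u \<subseteq> {..<n} \<and> card (u - t) = 0"
    have "finite (u - t)" using a finite_subset by blast
    then have "u - t = {}" using a by simp
    then have "u = t" using a by blast
    then show "u \<in> L" using a by blast
  qed
next
  case (Suc k)
  show ?case
  proof (intro allI impI)
    fix t assume a: "t \<in> L \<and> t \<subseteq> u \<and> u \<subseteq> {..<n} \<and> card (u - t) = Suc k"
    then have "u - t \<noteq> {}" by auto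
    then obtain i where i: "i \<in> u" "i \<notin> t" by blast
    have "i < n" using i a by blast
    then have L2: "insert i t \<in> L" using L_insert a i by blast
    have fin: "finite (u - t)" using a finite_subset by blast
    have "u - insert i t = (u - t) - {i}" by blast
    then have "card (u - insert i t) = k" using a i fin by simp
    moreover have "insert i t \<subseteq> u" using a i by blast
    ultimately have "insert i t \<in> L \<and> insert i t \<subseteq> u \<and> u \<subseteq> {..<n} \<and> card (u - insert i t) = k"
      using L2 a by simp
    then show "u \<in> L" by (rule Suc.IH[rule_format])
  qed
qed

lemma L_up: "t \<in> L \<Longrightarrow> t \<subseteq> u \<Longrightarrow> u \<subseteq> {..<n} \<Longrightarrow> u \<in> L"
  using L_up_aux by blast

lemma empty_notin_L: "{} \<notin> L"
proof
  assume "{} \<in> L"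
  then obtain f where f: "f \<in> I" "f \<noteq> bzero" "bLT le f = {}" by (rule L_E)
  have fb: "f \<in> bpolys n" using f I_sub by blast
  have fp: "f \<subseteq> Pow {..<n}" using fb unfolding bpolys_def by simp
  have m: "\<forall>u\<in>f. le (sqf u) (sqf {})" using bLT_props(2)[OF to fb f(2)] f(3) by simp
  have "\<forall>u\<in>f. u = {}"
  proof
    fix u assume u: "u \<in> f"
    then have un: "u \<subseteq> {..<n}" using fp by blast
    have e: "{} \<subseteq> {..<n}" by simp
    have "le (sqf u) (sqf {})" using m u by blast
    then show "u = {}" using to_antisym[OF to un e _ to_zero[OF to un]] by blast
  qed
  moreover have "f \<noteq> {}" using f(2) unfolding bzero_def .
  ultimately have "f = bone"
  proof -
    assume a1: "\<forall>u\<in>f. u = {}" and a2: "f \<noteq> {}"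
    then obtain u where "u \<in> f" by blast
    then have "{} \<in> f" using a1 by force
    then show "f = bone" unfolding bone_def using a1 by blast
  qed
  then show False using f(1) proper by simp
qed

lemma LTideal_eq: "bLT_ideal n le I = bideal_gen n ((\<lambda>u. {u}) ` L)"
proof -
  have "{{bLT le f} | f. f \<in> I \<and> f \<noteq> bzero} = (\<lambda>u. {u}) ` L"
  proof (intro equalityI subsetI)
    fix x assume "x \<in> {{bLT le f} | f. f \<in> I \<and> f \<noteq> bzero}"
    then obtain f where "x = {bLT le f}" "f \<in> I" "f \<noteq> bzero" by blast
    then show "x \<in> (\<lambda>u. {u}) ` L" using LT_in_L by blast
  next
    fix x assume "x \<in> (\<lambda>u. {u}) ` L"
    then obtain u where "x = {u}" "u \<in> L" by blast
    then show "x \<in> {{bLT le f} | f. f \<in> I \<and> f \<noteq> bzero}" unfolding L_def by blast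
  qed
  then show ?thesis unfolding bLT_ideal_def by (rule arg_cong)
qed

lemma L_Pow: "L \<subseteq> Pow {..<n}" using L_sub by blast

lemma M_iff:
  assumes t: "t \<subseteq> {..<n}"
  shows "{t} \<in> bLT_ideal n le I \<longleftrightarrow> t \<in> L"
proof
  assume m: "{t} \<in> bLT_ideal n le I"
  from m have m2: "{t} \<in> bideal_gen n ((\<lambda>u. {u}) ` L)" unfolding LTideal_eq .
  have "t \<in> {t}" by simp
  from monomial_ideal[OF L_Pow m2 this] obtain u where u: "u \<in> L" "u \<subseteq> t" by blast
  show "t \<in> L" by (rule L_up[OF u t])
next
  assume "t \<in> L"
  then have "{t} \<in> (\<lambda>u. {u}) ` L" by (rule imageI)
  then have "{t} \<in> bideal_gen n ((\<lambda>u. {u}) ` L)" by (rule subsetD[OF bideal_gen_sup])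
  then show "{t} \<in> bLT_ideal n le I" unfolding LTideal_eq .
qed

end

lemma badd_trans: "badd (badd a b) (badd b c) = badd a c"
  unfolding badd_def by blast

lemma badd_cancel: "badd r (badd r f) = f"
  unfolding badd_def by blast

lemma badd_self: "badd r r = bzero"
  unfolding badd_def bzero_def by blast

context bset
begin

definition D where "D r = {w \<in> Pow {..<n}. \<exists>v\<in>r. v \<in> L \<and> le (sqf w) (sqf v)}"

lemma NF_aux: "\<forall>r. r \<in> bpolys n \<and> card (D r) = k \<longrightarrow> (\<exists>r'\<in>bpolys n. badd r r' \<in> I \<and> (\<forall>v\<in>r'. v \<notin> L))"
proof (induction k rule: less_induct)
  case (less k)
  show ?case
  proof (intro allI impI)
    fix r assume a: "r \<in> bpolys n \<and> card (D r) = k"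
    then have rb: "r \<in> bpolys n" by simp
    have rp: "r \<subseteq> Pow {..<n}" using rb unfolding bpolys_def by simp
    show "\<exists>r'\<in>bpolys n. badd r r' \<in> I \<and> (\<forall>v\<in>r'. v \<notin> L)"
    proof (cases "\<forall>v\<in>r. v \<notin> L")
      case True
      have "badd r r \<in> I" unfolding badd_self using bidealD(2)[OF ideal] .
      then show ?thesis using True rb by blast
    next
      case False
      define B where "B = {v\<in>r. v \<in> L}"
      have Bne: "B \<noteq> {}" using False B_def by blast
      have Bf: "finite B" using bpolys_finite[OF rb] B_def by simp
      have Bp: "B \<subseteq> Pow {..<n}" using rp B_def by blast
      obtain u where u: "u \<in> B" "\<forall>v\<in>B. le (sqf v) (sqf u)" using to_max_ex[OF to Bf Bne Bp] by blast
      have ur: "u \<in> r" and uL: "u \<in> L" using u(1) B_def by auto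
      have un: "u \<subseteq> {..<n}" using uL L_sub by blast
      obtain f where f: "f \<in> I" "f \<noteq> bzero" "bLT le f = u" using uL by (rule L_E)
      have fb: "f \<in> bpolys n" using f(1) I_sub by blast
      have fp: "f \<subseteq> Pow {..<n}" using fb unfolding bpolys_def by simp
      have uf: "u \<in> f" and fmax: "\<forall>v\<in>f. le (sqf v) (sqf u)"
        using bLT_props(1,2)[OF to fb f(2)] f(3) by auto
      define r1 where "r1 = badd r f"
      have r1b: "r1 \<in> bpolys n" unfolding r1_def by (rule bpolys_badd[OF rb fb])
      have r1I: "badd r r1 \<in> I" unfolding r1_def badd_cancel by (rule f(1))
      have below: "le (sqf v) (sqf u)" if "v \<in> r1" "v \<in> L" for v
      proof -
        have "v \<in> r \<or> v \<in> f" using that(1) unfolding r1_def badd_def by blast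
        then show ?thesis
        proof
          assume "v \<in> r" then have "v \<in> B" using that(2) B_def by blast
          then show ?thesis using u(2) by blast
        next
          assume "v \<in> f" then show ?thesis using fmax by blast
        qed
      qed
      have u_notin: "u \<notin> r1" using ur uf unfolding r1_def badd_def by blast
      have sub: "D r1 \<subseteq> D r"
      proof
        fix w assume "w \<in> D r1"
        then obtain v where v: "w \<in> Pow {..<n}" "v \<in> r1" "v \<in> L" "le (sqf w) (sqf v)" unfolding D_def by blast
        have vn: "v \<subseteq> {..<n}" using v(3) L_sub by blast
        have wn: "w \<subseteq> {..<n}" using v(1) by blast
        have "le (sqf w) (sqf u)" using to_trans[OF to wn vn un v(4) below[OF v(2,3)]] .
        then show "w \<in> D r" unfolding D_def using v(1) ur uL by blast
      qed
      have uD: "u \<in> D r" unfolding D_def using un ur uL to_refl[OF to un] by blast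
      have uD1: "u \<notin> D r1"
      proof
        assume "u \<in> D r1"
        then obtain v where v: "v \<in> r1" "v \<in> L" "le (sqf u) (sqf v)" unfolding D_def by blast
        have vn: "v \<subseteq> {..<n}" using v(2) L_sub by blast
        have "v = u" using to_antisym[OF to vn un below[OF v(1,2)] v(3)] .
        then show False using v(1) u_notin by simp
      qed
      have fD: "finite (D r)" unfolding D_def by simp
      have "D r1 \<subset> D r" using sub uD uD1 by blast
      then have "card (D r1) < k" using a psubset_card_mono[OF fD] by simp
      then obtain r2 where r2: "r2 \<in> bpolys n" "badd r1 r2 \<in> I" "\<forall>v\<in>r2. v \<notin> L"
        using less.IH r1b by blast
      have "badd (badd r r1) (badd r1 r2) \<in> I" by (rule bidealD(3)[OF ideal r1I r2(2)])
      then have "badd r r2 \<in> I" unfolding badd_trans .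
      then show ?thesis using r2 by blast
    qed
  qed
qed

lemma NF: "p \<in> bpolys n \<Longrightarrow> \<exists>r\<in>bpolys n. badd p r \<in> I \<and> (\<forall>v\<in>r. v \<notin> L)"
  using NF_aux by blast

definition T where "T = {t\<in>L. \<forall>t'\<in>L. t' \<subseteq> t \<longrightarrow> t' = t}"

lemma T_below_aux: "\<forall>u. u \<in> L \<and> card u = k \<longrightarrow> (\<exists>t\<in>T. t \<subseteq> u)"
proof (induction k rule: less_induct)
  case (less k)
  show ?case
  proof (intro allI impI)
    fix u assume a: "u \<in> L \<and> card u = k"
    show "\<exists>t\<in>T. t \<subseteq> u"
    proof (cases "u \<in> T")
      case True then show ?thesis by blast
    next
      case False
      then obtain t' where t': "t' \<in> L" "t' \<subseteq> u" "t' \<noteq> u" using a unfolding T_def by blast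
      have fu: "finite u" using a L_sub finite_subset by blast
      have "card t' < k" using a t' psubset_card_mono[OF fu] by blast
      then obtain t where "t \<in> T" "t \<subseteq> t'" using less.IH t'(1) by blast
      then show ?thesis using t'(2) by blast
    qed
  qed
qed

lemma T_below: "u \<in> L \<Longrightarrow> \<exists>t\<in>T. t \<subseteq> u"
  using T_below_aux by blast

definition good where "good t g \<longleftrightarrow> g \<in> I \<and> t \<in> g \<and> bLT le g = t \<and> (\<forall>v\<in>g. v \<noteq> t \<longrightarrow> v \<notin> L)"

lemma good_ex: assumes t: "t \<in> L" shows "\<exists>g. good t g"
proof -
  obtain f where f: "f \<in> I" "f \<noteq> bzero" "bLT le f = t" using t by (rule L_E)
  have fb: "f \<in> bpolys n" using f(1) I_sub by blast
  have tf: "t \<in> f" using bLT_props(1)[OF to fb f(2)] f(3) by simp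
  define p where "p = f - {t}"
  have pb: "p \<in> bpolys n" using fb unfolding p_def bpolys_def by blast
  obtain r where r: "r \<in> bpolys n" "badd p r \<in> I" "\<forall>v\<in>r. v \<notin> L" using NF[OF pb] by blast
  have tr: "t \<notin> r" using r(3) t by blast
  define g where "g = insert t r"
  have "g = badd f (badd p r)" unfolding g_def p_def badd_def using tf tr by blast
  then have gI: "g \<in> I" using bidealD(3)[OF ideal f(1) r(2)] by simp
  have gb: "g \<in> bpolys n" using gI I_sub by blast
  have gz: "g \<noteq> bzero" unfolding g_def bzero_def by blast
  have "bLT le g \<in> g" using bLT_props(1)[OF to gb gz] .
  moreover have "bLT le g \<in> L" using LT_in_L[OF gI gz] .
  ultimately have "bLT le g = t" using r(3) unfolding g_def by blast
  then have "good t g" unfolding good_def using gI r(3) unfolding g_def by blast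
  then show ?thesis by blast
qed

definition gt where "gt t = (SOME g. good t g)"

lemma gt_good: "t \<in> L \<Longrightarrow> good t (gt t)"
  unfolding gt_def using good_ex someI_ex by metis

end

context bset
begin

lemma T_L: "t \<in> T \<Longrightarrow> t \<in> L" unfolding T_def by blast

lemma T_min: "t \<in> T \<Longrightarrow> t' \<in> L \<Longrightarrow> t' \<subseteq> t \<Longrightarrow> t' = t" unfolding T_def by blast

lemma gtT: "t \<in> T \<Longrightarrow> good t (gt t)" using gt_good T_L by blast

lemma gt_I: "t \<in> T \<Longrightarrow> gt t \<in> I" using gtT unfolding good_def by blast
lemma gt_LT: "t \<in> T \<Longrightarrow> bLT le (gt t) = t" using gtT unfolding good_def by blast
lemma gt_mem: "t \<in> T \<Longrightarrow> t \<in> gt t" using gtT unfolding good_def by blast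
lemma gt_red: "t \<in> T \<Longrightarrow> v \<in> gt t \<Longrightarrow> v \<noteq> t \<Longrightarrow> v \<notin> L" using gtT unfolding good_def by blast

lemma gens_eq: "{{bLT le g} | g. g \<in> gt ` A} = (\<lambda>t. {t}) ` A" if "A \<subseteq> T" for A
proof (intro equalityI subsetI)
  fix x assume "x \<in> {{bLT le g} | g. g \<in> gt ` A}"
  then obtain t where t: "t \<in> A" "x = {bLT le (gt t)}" by blast
  then have "x = {t}" using gt_LT that by blast
  then show "x \<in> (\<lambda>t. {t}) ` A" using t(1) by blast
next
  fix x assume "x \<in> (\<lambda>t. {t}) ` A"
  then obtain t where t: "t \<in> A" "x = {t}" by blast
  then have "x = {bLT le (gt t)}" using gt_LT that by auto
  then show "x \<in> {{bLT le g} | g. g \<in> gt ` A}" using t(1) by blast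
qed

lemma T_Pow: "T \<subseteq> Pow {..<n}" using T_L L_sub by blast

lemma GB_exists: "\<exists>G. is_reduced_boolean_gb n le I G"
proof -
  define G where "G = gt ` T"
  have fT: "finite T" using T_Pow finite_subset by blast
  have c1: "finite G" unfolding G_def using fT by simp
  have c2: "G \<subseteq> I" unfolding G_def using gt_I by blast
  have c3: "bzero \<notin> G" unfolding G_def bzero_def using gt_mem by blast
  have ge: "{{bLT le g} | g. g \<in> G} = (\<lambda>t. {t}) ` T" unfolding G_def by (rule gens_eq) simp
  have TsL: "(\<lambda>t. {t}) ` T \<subseteq> (\<lambda>u. {u}) ` L" using T_L by blast
  have Tb: "(\<lambda>t. {t}) ` T \<subseteq> bpolys n" using T_Pow bpolys_single by blast
  have c4: "bideal_gen n {{bLT le g} | g. g \<in> G} = bLT_ideal n le I"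
    unfolding ge LTideal_eq
  proof (rule equalityI)
    show "bideal_gen n ((\<lambda>t. {t}) ` T) \<subseteq> bideal_gen n ((\<lambda>u. {u}) ` L)"
      by (rule bideal_gen_mono[OF TsL])
    show "bideal_gen n ((\<lambda>u. {u}) ` L) \<subseteq> bideal_gen n ((\<lambda>t. {t}) ` T)"
    proof (rule bideal_gen_least[OF bideal_gen_ideal[OF Tb]], rule image_subsetI)
      fix u assume uL: "u \<in> L"
      obtain t where t: "t \<in> T" "t \<subseteq> u" using T_below[OF uL] by blast
      have un: "u \<subseteq> {..<n}" using uL L_sub by blast
      have tn: "t \<subseteq> {..<n}" using t(1) T_Pow by blast
      have "{t} \<in> (\<lambda>t. {t}) ` T" using t(1) by (rule imageI)
      then have tg: "{t} \<in> bideal_gen n ((\<lambda>t. {t}) ` T)" by (rule subsetD[OF bideal_gen_sup])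
      have "bmul {u} {t} = {u \<union> t}" by (rule bmul_single[OF un tn])
      also have "u \<union> t = u" using t(2) by blast
      finally have e: "bmul {u} {t} = {u}" .
      have "bmul {u} {t} \<in> bideal_gen n ((\<lambda>t. {t}) ` T)"
        by (rule bidealD(4)[OF bideal_gen_ideal[OF Tb] tg bpolys_single[OF un]])
      then show "{u} \<in> bideal_gen n ((\<lambda>t. {t}) ` T)" unfolding e .
    qed
  qed
  have c5: "\<forall>g\<in>G. {bLT le g} \<notin> bideal_gen n {{bLT le g'} | g'. g' \<in> G - {g}}"
  proof
    fix g assume "g \<in> G"
    then obtain t where t: "t \<in> T" "g = gt t" unfolding G_def by blast
    have "G - {g} = gt ` (T - {t})"
    proof (intro equalityI subsetI)
      fix x assume "x \<in> G - {g}"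
      then obtain t' where "t' \<in> T" "x = gt t'" "x \<noteq> gt t" unfolding G_def t(2) by blast
      then show "x \<in> gt ` (T - {t})" by blast
    next
      fix x assume "x \<in> gt ` (T - {t})"
      then obtain t' where t': "t' \<in> T" "t' \<noteq> t" "x = gt t'" by blast
      have "x \<noteq> gt t" using t' gt_LT t(1) by metis
      then show "x \<in> G - {g}" unfolding G_def t(2) using t' by blast
    qed
    then have e: "{{bLT le g'} | g'. g' \<in> G - {g}} = (\<lambda>t. {t}) ` (T - {t})"
      using gens_eq[of "T - {t}"] by simp
    have Up: "T - {t} \<subseteq> Pow {..<n}" using T_Pow by blast
    show "{bLT le g} \<notin> bideal_gen n {{bLT le g'} | g'. g' \<in> G - {g}}"
    proof
      assume "{bLT le g} \<in> bideal_gen n {{bLT le g'} | g'. g' \<in> G - {g}}"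
      then have "{bLT le g} \<in> bideal_gen n ((\<lambda>t. {t}) ` (T - {t}))" unfolding e .
      then have m: "{t} \<in> bideal_gen n ((\<lambda>t. {t}) ` (T - {t}))" unfolding t(2) gt_LT[OF t(1)] .
      have "t \<in> {t}" by simp
      from monomial_ideal[OF Up m this] obtain t' where t': "t' \<in> T - {t}" "t' \<subseteq> t" by blast
      have "t' = t" using T_min[OF t(1) T_L t'(2)] t'(1) by blast
      then show False using t'(1) by blast
    qed
  qed
  have c6: "\<forall>g\<in>G. \<forall>v\<in>g. v \<noteq> bLT le g \<longrightarrow> {v} \<notin> bLT_ideal n le I"
  proof (intro ballI impI)
    fix g v assume g: "g \<in> G" and v: "v \<in> g" "v \<noteq> bLT le g"
    then obtain t where t: "t \<in> T" "g = gt t" unfolding G_def by blast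
    have "v \<notin> L" using gt_red[OF t(1)] v t gt_LT[OF t(1)] by simp
    moreover have "v \<subseteq> {..<n}" using gt_I[OF t(1)] I_sub v(1) t(2) unfolding bpolys_def by blast
    ultimately show "{v} \<notin> bLT_ideal n le I" using M_iff by blast
  qed
  have "is_reduced_boolean_gb n le I G"
    unfolding is_reduced_boolean_gb_def is_boolean_gb_def using c1 c2 c3 c4 c5 c6 by blast
  then show ?thesis by blast
qed

end

context bset
begin

lemma GB_structure:
  fixes s :: nat and z :: "nat \<Rightarrow> nat" and G :: "bpoly set"
  assumes zn: "\<forall>j<s. z j < n" and zL: "\<forall>j<s. {z j} \<in> L"
    and G: "is_reduced_boolean_gb n le I G"
  shows "\<exists>ht :: nat \<Rightarrow> bpoly. \<exists>gs :: bpoly list.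
           (\<forall>j<s. ht j \<in> bsubring n (z ` {..<s})) \<and>
           set gs \<subseteq> bsubring n (z ` {..<s}) \<and>
           G = {badd (bvar (z j)) (ht j) | j. j < s} \<union> set gs"
proof -
  define Zs where "Zs = z ` {..<s}"
  define M where "M = bLT_ideal n le I"
  have GI: "G \<subseteq> I" and fG: "finite G" and G0: "bzero \<notin> G"
    and Ggen: "bideal_gen n {{bLT le g} | g. g \<in> G} = M"
    using G unfolding is_reduced_boolean_gb_def is_boolean_gb_def M_def by blast+
  have Gmin: "\<forall>g\<in>G. {bLT le g} \<notin> bideal_gen n {{bLT le g'} | g'. g' \<in> G - {g}}"
    using G unfolding is_reduced_boolean_gb_def by blast
  have Gred: "\<forall>g\<in>G. \<forall>v\<in>g. v \<noteq> bLT le g \<longrightarrow> {v} \<notin> M"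
    using G unfolding is_reduced_boolean_gb_def M_def by blast
  have gb: "g \<in> bpolys n" if "g \<in> G" for g using that GI I_sub by blast
  have gz: "g \<noteq> bzero" if "g \<in> G" for g using that G0 by blast
  have gLTn: "bLT le g \<subseteq> {..<n}" if "g \<in> G" for g using bLT_props(3)[OF to gb[OF that] gz[OF that]] .
  have gLTL: "bLT le g \<in> L" if "g \<in> G" for g using LT_in_L[OF _ gz[OF that]] that GI by blast
  define LG where "LG = bLT le ` G"
  have LGp: "LG \<subseteq> Pow {..<n}" unfolding LG_def using gLTn by blast
  have geq: "{{bLT le g} | g. g \<in> G} = (\<lambda>u. {u}) ` LG" unfolding LG_def by blast
  have findiv: "\<exists>g\<in>G. bLT le g \<subseteq> v" if vv: "v \<subseteq> {..<n}" "v \<in> L" for v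
  proof -
    have "{v} \<in> M" unfolding M_def using M_iff[OF vv(1)] vv(2) by simp
    then have m: "{v} \<in> bideal_gen n ((\<lambda>u. {u}) ` LG)" using Ggen geq by simp
    have "v \<in> {v}" by simp
    from monomial_ideal[OF LGp m this] obtain u where "u \<in> LG" "u \<subseteq> v" by blast
    then show ?thesis unfolding LG_def by blast
  qed
  have exj: "\<exists>g. g \<in> G \<and> bLT le g = {z j}" if j: "j < s" for j
  proof -
    have "{z j} \<subseteq> {..<n}" using zn j by simp
    then obtain g where g: "g \<in> G" "bLT le g \<subseteq> {z j}" using findiv zL j by blast
    have "bLT le g \<noteq> {}" using gLTL[OF g(1)] empty_notin_L by metis
    then have "bLT le g = {z j}" using g(2) by blast
    then show ?thesis using g(1) by blast
  qed
  define gj where "gj j = (SOME g. g \<in> G \<and> bLT le g = {z j})" for j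
  have gj: "gj j \<in> G" "bLT le (gj j) = {z j}" if "j < s" for j
    using someI_ex[OF exj[OF that]] unfolding gj_def by blast+
  have termZ: "v \<in> L" if vv: "v \<subseteq> {..<n}" "v \<inter> Zs \<noteq> {}" for v
  proof -
    obtain k where k: "k < s" "z k \<in> v" using vv(2) unfolding Zs_def by blast
    have "{z k} \<subseteq> v" using k by blast
    then show ?thesis using L_up zL k vv(1) by blast
  qed
  have tail: "v \<inter> Zs = {}" if "g \<in> G" "v \<in> g" "v \<noteq> bLT le g" for g v
  proof -
    have vn: "v \<subseteq> {..<n}" using gb[OF that(1)] that(2) unfolding bpolys_def by blast
    have "{v} \<notin> M" using Gred that by blast
    then have "v \<notin> L" unfolding M_def using M_iff[OF vn] by simp
    then show ?thesis using termZ vn by blast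
  qed
  define ht where "ht j = badd (bvar (z j)) (gj j)" for j
  have ht_back: "badd (bvar (z j)) (ht j) = gj j" for j unfolding ht_def badd_cancel ..
  have ht_Bm: "ht j \<in> bsubring n Zs" if j: "j < s" for j
  proof -
    have hb: "ht j \<in> bpolys n" unfolding ht_def
      using bpolys_badd[OF bpolys_bvar gb[OF gj(1)[OF j]]] zn j by blast
    have "v \<inter> Zs = {}" if vh: "v \<in> ht j" for v
    proof -
      have zm: "{z j} \<in> gj j" using bLT_props(1)[OF to gb[OF gj(1)[OF j]] gz[OF gj(1)[OF j]]] gj(2)[OF j] by simp
      have "v \<in> gj j" "v \<noteq> {z j}" using vh zm unfolding ht_def badd_def bvar_def by auto
      then show ?thesis using tail[OF gj(1)[OF j]] gj(2)[OF j] by simp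
    qed
    then show ?thesis unfolding bsubring_def using hb by blast
  qed
  define R where "R = G - gj ` {..<s}"
  have R_Bm: "g \<in> bsubring n Zs" if g: "g \<in> R" for g
  proof -
    have gG: "g \<in> G" and gnot: "\<forall>k<s. gj k \<noteq> g" using g unfolding R_def by auto
    have "v \<inter> Zs = {}" if v: "v \<in> g" for v
    proof (cases "v = bLT le g")
      case False then show ?thesis using tail[OF gG v] by blast
    next
      case True
      show ?thesis
      proof (rule ccontr)
        assume "v \<inter> Zs \<noteq> {}"
        then obtain k where k: "k < s" "z k \<in> v" unfolding Zs_def by blast
        define Gen where "Gen = {{bLT le g'} | g'. g' \<in> G - {g}}"
        have Genb: "Gen \<subseteq> bpolys n" unfolding Gen_def using gLTn bpolys_single by blast
        have "{bLT le (gj k)} \<in> Gen" unfolding Gen_def using gj(1)[OF k(1)] gnot k(1) by blast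
        then have "{{z k}} \<in> Gen" using gj(2)[OF k(1)] by simp
        then have zg: "{{z k}} \<in> bideal_gen n Gen" by (rule subsetD[OF bideal_gen_sup])
        have vn: "v \<subseteq> {..<n}" using True gLTn[OF gG] by simp
        have zkn: "{z k} \<subseteq> {..<n}" using zn k(1) by simp
        have "bmul {v} {{z k}} = {v \<union> {z k}}" by (rule bmul_single[OF vn zkn])
        also have "v \<union> {z k} = v" using k(2) by blast
        finally have e: "bmul {v} {{z k}} = {v}" .
        have "bmul {v} {{z k}} \<in> bideal_gen n Gen"
          by (rule bidealD(4)[OF bideal_gen_ideal[OF Genb] zg bpolys_single[OF vn]])
        then have "{v} \<in> bideal_gen n Gen" unfolding e .
        then have "{bLT le g} \<in> bideal_gen n Gen" unfolding True .
        then show False using Gmin gG unfolding Gen_def by blast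
      qed
    qed
    moreover have "g \<in> bpolys n" using gb[OF gG] .
    ultimately show ?thesis unfolding bsubring_def by blast
  qed
  have fR: "finite R" unfolding R_def using fG by simp
  obtain gs where gs: "set gs = R" using finite_list[OF fR] by blast
  have e1: "{badd (bvar (z j)) (ht j) | j. j < s} = gj ` {..<s}" unfolding ht_back by blast
  have e2: "gj ` {..<s} \<subseteq> G" using gj(1) by blast
  have "G = {badd (bvar (z j)) (ht j) | j. j < s} \<union> set gs" unfolding e1 gs R_def using e2 by blast
  moreover have "\<forall>j<s. ht j \<in> bsubring n (z ` {..<s})" using ht_Bm unfolding Zs_def by blast
  moreover have "set gs \<subseteq> bsubring n (z ` {..<s})" using R_Bm gs unfolding Zs_def by blast
  ultimately show ?thesis by blast
qed

end

lemma fj_facts: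
  assumes ideal: "bideal n I" and sigma: "term_ordering n \<sigma>"
    and sep: "coherently_Z_separating n \<sigma> I s z f" and z_range: "\<forall>j<s. z j < n" and j: "j < s"
  shows "f j \<in> I" "f j \<in> bpolys n" "{z j} \<in> f j" "\<And>u. u \<in> f j \<Longrightarrow> u \<noteq> {z j} \<Longrightarrow> u \<inter> z ` {..<s} = {}"
    "bLT \<sigma> (f j) = {z j}" "f j \<noteq> bzero"
proof -
  have s1: "\<forall>i<s. f i \<in> I \<and> f i \<noteq> bzero \<and> bLT \<sigma> (f i) = {z i}"
    and s2: "\<forall>i<s. \<forall>j<s. i \<noteq> j \<longrightarrow> (\<forall>t\<in>f i. z j \<notin> t)"
    using sep unfolding coherently_Z_separating_def by blast+
  show fI: "f j \<in> I" and fz: "f j \<noteq> bzero" and lt: "bLT \<sigma> (f j) = {z j}" using s1 j by blast+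
  show fb: "f j \<in> bpolys n" using fI bidealD(1)[OF ideal] by blast
  show zm: "{z j} \<in> f j" using bLT_props(1)[OF sigma fb fz] lt by simp
  fix u assume u: "u \<in> f j" "u \<noteq> {z j}"
  have un: "u \<subseteq> {..<n}" using fb u(1) unfolding bpolys_def by blast
  have zjn: "{z j} \<subseteq> {..<n}" using z_range j by simp
  have zj: "z j \<notin> u"
  proof
    assume "z j \<in> u"
    have a: "\<sigma> (sqf {z j}) (sqf u)" using to_sub[OF sigma _ un, of "{z j}"] \<open>z j \<in> u\<close> by blast
    have b: "\<sigma> (sqf u) (sqf {z j})" using bLT_props(2)[OF sigma fb fz] lt u(1) by simp
    have "u = {z j}" using to_antisym[OF sigma un zjn b a] .
    then show False using u(2) by simp
  qed
  have "z k \<notin> u" if "k < s" for k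
  proof (cases "k = j")
    case True then show ?thesis using zj by simp
  next
    case False then show ?thesis using s2 j that u(1) by blast
  qed
  then show "u \<inter> z ` {..<s} = {}" by blast
qed

lemma elimD:
  assumes "elimination_ordering n le Zs" "\<alpha> \<in> bmonos n" "\<beta> \<in> bmonos n" "x \<in> Zs" "\<alpha> x > 0" "\<forall>z\<in>Zs. \<beta> z = 0"
  shows "le \<beta> \<alpha>"
proof -
  have "\<forall>\<alpha>\<in>bmonos n. \<forall>\<beta>\<in>bmonos n. (\<exists>z\<in>Zs. \<alpha> z > 0) \<and> (\<forall>z\<in>Zs. \<beta> z = 0) \<longrightarrow> le \<beta> \<alpha> \<and> \<beta> \<noteq> \<alpha>"
    using assms(1) unfolding elimination_ordering_def by (elim conjE)
  moreover have "(\<exists>z\<in>Zs. \<alpha> z > 0) \<and> (\<forall>z\<in>Zs. \<beta> z = 0)" using assms(4,5,6) by blast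
  ultimately show ?thesis using assms(2,3) by blast
qed

lemma part_c:
  assumes ideal: "bideal n I" and sigma: "term_ordering n \<sigma>"
    and sep: "coherently_Z_separating n \<sigma> I s z f" and z_range: "\<forall>j<s. z j < n"
    and tau: "elimination_ordering n \<tau> (z ` {..<s})"
  shows "bideal_gen n {bvar (z j) | j. j < s} \<subseteq> bLT_ideal n \<tau> I"
proof -
  have tto: "term_ordering n \<tau>" using tau unfolding elimination_ordering_def by (elim conjE)
  have "{bvar (z j) | j. j < s} \<subseteq> {{bLT \<tau> g} | g. g \<in> I \<and> g \<noteq> bzero}"
  proof
    fix x assume "x \<in> {bvar (z j) | j. j < s}"
    then obtain j where j: "j < s" "x = bvar (z j)" by blast
    note F = fj_facts[OF ideal sigma sep z_range j(1)]
    have fp: "f j \<subseteq> Pow {..<n}" using F(2) unfolding bpolys_def by simp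
    have zjn: "{z j} \<subseteq> {..<n}" using z_range j by simp
    have "\<forall>u\<in>f j. \<tau> (sqf u) (sqf {z j})"
    proof
      fix u assume u: "u \<in> f j"
      have un: "u \<subseteq> {..<n}" using u fp by blast
      show "\<tau> (sqf u) (sqf {z j})"
      proof (cases "u = {z j}")
        case True then show ?thesis using to_refl[OF tto zjn] by simp
      next
        case False
        then have "u \<inter> z ` {..<s} = {}" using F(4) u by blast
        then have "\<forall>y\<in>z ` {..<s}. sqf u y = 0" unfolding sqf_def by auto
        moreover have "sqf {z j} (z j) > 0" unfolding sqf_def by simp
        moreover have "z j \<in> z ` {..<s}" using j by blast
        ultimately show ?thesis using elimD[OF tau sqf_bmonos[OF zjn] sqf_bmonos[OF un]] by blast
      qed
    qed
    then have "bLT \<tau> (f j) = {z j}" using bLT_eq[OF tto fp F(3)] by blast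
    then have "x = {bLT \<tau> (f j)}" using j(2) unfolding bvar_def by simp
    then show "x \<in> {{bLT \<tau> g} | g. g \<in> I \<and> g \<noteq> bzero}" using F(1,6) by blast
  qed
  then show ?thesis unfolding bLT_ideal_def by (rule bideal_gen_mono)
qed

lemma bsum_empty: "bsum {} g = {}" unfolding bsum_def by simp

lemma bsum_insert: "finite A \<Longrightarrow> a \<notin> A \<Longrightarrow> bsum (insert a A) g = badd (g a) (bsum A g)"
proof -
  assume fA: "finite A" and aA: "a \<notin> A"
  have "u \<in> bsum (insert a A) g \<longleftrightarrow> u \<in> badd (g a) (bsum A g)" for u
  proof (cases "u \<in> g a")
    case True
    then have "{a' \<in> insert a A. u \<in> g a'} = insert a {a' \<in> A. u \<in> g a'}" by auto
    moreover have "card (insert a {a' \<in> A. u \<in> g a'}) = Suc (card {a' \<in> A. u \<in> g a'})"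
      using fA aA by simp
    ultimately show ?thesis using True unfolding bsum_def badd_def by auto
  next
    case False
    then have "{a' \<in> insert a A. u \<in> g a'} = {a' \<in> A. u \<in> g a'}" by auto
    then show ?thesis using False unfolding bsum_def badd_def by auto
  qed
  then show ?thesis by blast
qed

definition avoids :: "nat set \<Rightarrow> bpoly \<Rightarrow> bool" where
  "avoids Zs q \<longleftrightarrow> (\<forall>t\<in>q. t \<inter> Zs = {})"

lemma avoids_bmul: "avoids Zs p \<Longrightarrow> avoids Zs q \<Longrightarrow> avoids Zs (bmul p q)"
  unfolding avoids_def using bmul_mem by fastforce

lemma avoids_bprod: "\<forall>p\<in>set ps. avoids Zs p \<Longrightarrow> avoids Zs (bprod_list ps)"
proof (induction ps)
  case Nil then show ?case unfolding bprod_list_def bone_def avoids_def by simp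
next
  case (Cons p ps)
  then have "avoids Zs (bmul p (bprod_list ps))" using avoids_bmul by simp
  then show ?case unfolding bprod_list_def by simp
qed

lemma avoids_bsum: "\<forall>a\<in>A. avoids Zs (g a) \<Longrightarrow> avoids Zs (bsum A g)"
  unfolding avoids_def using bsum_mem by fastforce

lemma avoids_badd: "avoids Zs p \<Longrightarrow> avoids Zs q \<Longrightarrow> avoids Zs (badd p q)"
  unfolding avoids_def badd_def by blast

lemma bsubring_iff: "p \<in> bsubring n Zs \<longleftrightarrow> p \<in> bpolys n \<and> avoids Zs p"
  unfolding bsubring_def avoids_def by blast

lemma badd_comm: "badd p q = badd q p" unfolding badd_def by blast

lemma badd_split: "badd p q = badd (badd p a) (badd (badd a b) (badd b q))"
  unfolding badd_def by blast

lemma badd_ins: "t \<notin> p \<Longrightarrow> badd (insert t p) (badd X Y) = badd (badd {t} X) (badd p Y)"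
  unfolding badd_def by blast

locale zsub =
  fixes n :: nat and I :: "bpoly set" and s :: nat and z :: "nat \<Rightarrow> nat" and h :: "nat \<Rightarrow> bpoly"
  assumes ideal: "bideal n I"
    and z_inj: "inj_on z {..<s}" and z_range: "\<forall>j<s. z j < n"
    and hI: "\<forall>j<s. badd (bvar (z j)) (h j) \<in> I"
    and hB: "\<forall>j<s. h j \<in> bsubring n (z ` {..<s})"
begin

definition Zs where "Zs = z ` {..<s}"
definition img where "img i = (if i \<in> z ` {..<s} then h (THE j. j < s \<and> z j = i) else bvar i)"
definition phi where "phi = bsubst img"

lemma img_z: "j < s \<Longrightarrow> img (z j) = h j"
proof -
  assume j: "j < s"
  have "(THE k. k < s \<and> z k = z j) = j"
    using j z_inj unfolding inj_on_def by (intro the_equality) auto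
  then show ?thesis unfolding img_def using j by simp
qed

lemma img_nz: "i \<notin> Zs \<Longrightarrow> img i = bvar i" unfolding img_def Zs_def by simp

lemma img_cases: "(i \<in> Zs \<and> (\<exists>j<s. i = z j \<and> img i = h j)) \<or> (i \<notin> Zs \<and> img i = bvar i)"
proof (cases "i \<in> Zs")
  case True
  then obtain j where "j < s" "i = z j" unfolding Zs_def by blast
  then show ?thesis using img_z True by blast
next
  case False then show ?thesis using img_nz by blast
qed

lemma img_Bm: "i < n \<Longrightarrow> img i \<in> bpolys n \<and> avoids Zs (img i)"
proof -
  assume i: "i < n"
  show ?thesis
  proof (cases "i \<in> Zs")
    case True
    then obtain j where j: "j < s" "img i = h j" using img_cases by blast
    then show ?thesis using hB bsubring_iff Zs_def by metis
  next
    case False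
    then have "img i = bvar i" by (rule img_nz)
    then show ?thesis using i False bpolys_bvar unfolding avoids_def bvar_def by auto
  qed
qed

lemma img_fin: "finite (img i)"
proof (cases "i \<in> Zs")
  case True
  then obtain j where j: "j < s" "img i = h j" using img_cases by blast
  then have "h j \<in> bpolys n" using hB unfolding bsubring_def by blast
  then show ?thesis using j bpolys_finite by simp
next
  case False then show ?thesis using img_nz unfolding bvar_def by simp
qed

lemma img_I: "i < n \<Longrightarrow> badd (bvar i) (img i) \<in> I"
proof (cases "i \<in> Zs")
  case True
  then obtain j where j: "j < s" "i = z j" "img i = h j" using img_cases by blast
  then show ?thesis using hI by simp
next
  case False
  then show ?thesis using img_nz badd_self bidealD(2)[OF ideal] by simp
qed

lemma phi_b: "p \<in> bpolys n \<Longrightarrow> phi p \<in> bpolys n"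
  unfolding phi_def using bpolys_bsubst img_Bm by blast

lemma phi_Bm: "p \<in> bpolys n \<Longrightarrow> phi p \<in> bsubring n Zs"
proof -
  assume p: "p \<in> bpolys n"
  have "avoids Zs (bprod_list (map img (sorted_list_of_set t)))" if t: "t \<in> p" for t
  proof (rule avoids_bprod, rule ballI)
    fix q assume "q \<in> set (map img (sorted_list_of_set t))"
    then obtain i where i: "i \<in> t" "q = img i" using bpolys_term_finite[OF p t] by auto
    have "i < n" using p t i(1) unfolding bpolys_def by blast
    then show "avoids Zs q" using img_Bm i(2) by blast
  qed
  then have "avoids Zs (phi p)" unfolding phi_def bsubst_def by (intro avoids_bsum) blast
  then show ?thesis using phi_b[OF p] bsubring_iff by blast
qed

lemma ev_phi: "p \<in> bpolys n \<Longrightarrow> ev (phi p) x = ev p {i. ev (img i) x}"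
  unfolding phi_def using ev_bsubst[of p img x] bpolys_finite bpolys_term_finite img_fin by blast

lemma phi_badd: "p \<in> bpolys n \<Longrightarrow> q \<in> bpolys n \<Longrightarrow> phi (badd p q) = badd (phi p) (phi q)"
proof -
  assume p: "p \<in> bpolys n" and q: "q \<in> bpolys n"
  have pq: "badd p q \<in> bpolys n" using bpolys_badd[OF p q] .
  show ?thesis
  proof (rule ev_inj[of _ n])
    show "phi (badd p q) \<in> bpolys n" using phi_b[OF pq] .
    show "badd (phi p) (phi q) \<in> bpolys n" using bpolys_badd[OF phi_b[OF p] phi_b[OF q]] .
    fix x
    show "ev (phi (badd p q)) x = ev (badd (phi p) (phi q)) x"
      using ev_phi[OF pq] ev_phi[OF p] ev_phi[OF q] ev_badd[OF bpolys_finite[OF p] bpolys_finite[OF q]]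
        ev_badd[OF bpolys_finite[OF phi_b[OF p]] bpolys_finite[OF phi_b[OF q]]] by simp
  qed
qed

lemma phi_bmul: "p \<in> bpolys n \<Longrightarrow> q \<in> bpolys n \<Longrightarrow> phi (bmul p q) = bmul (phi p) (phi q)"
proof -
  assume p: "p \<in> bpolys n" and q: "q \<in> bpolys n"
  have pq: "bmul p q \<in> bpolys n" using bpolys_bmul[OF p q] .
  show ?thesis
  proof (rule ev_inj[of _ n])
    show "phi (bmul p q) \<in> bpolys n" using phi_b[OF pq] .
    show "bmul (phi p) (phi q) \<in> bpolys n" using bpolys_bmul[OF phi_b[OF p] phi_b[OF q]] .
    fix x
    show "ev (phi (bmul p q)) x = ev (bmul (phi p) (phi q)) x"
      using ev_phi[OF pq] ev_phi[OF p] ev_phi[OF q] ev_bmul[OF bpolys_finite[OF p] bpolys_finite[OF q]]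
        ev_bmul[OF bpolys_finite[OF phi_b[OF p]] bpolys_finite[OF phi_b[OF q]]] by simp
  qed
qed

lemma phi_bone: "phi bone = bone"
proof (rule ev_inj[of _ n])
  show "phi bone \<in> bpolys n" using phi_b[OF bpolys_bone] .
  show "bone \<in> bpolys n" by (rule bpolys_bone)
  fix x show "ev (phi bone) x = ev bone x" using ev_phi[OF bpolys_bone] by simp
qed

lemma tel: "set xs \<subseteq> {..<n} \<Longrightarrow> badd (bprod_list (map bvar xs)) (bprod_list (map img xs)) \<in> I"
proof (induction xs)
  case Nil
  have "badd (bprod_list (map bvar [])) (bprod_list (map img [])) = badd bone bone"
    by (simp add: bprod_list_def)
  also have "\<dots> = bzero" by (rule badd_self)
  finally show ?case using bidealD(2)[OF ideal] by simp
next
  case (Cons i xs)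
  have i: "i < n" and xs: "set xs \<subseteq> {..<n}" using Cons.prems by auto
  define A where "A = bprod_list (map bvar xs)"
  define B where "B = bprod_list (map img xs)"
  have Ab: "A \<in> bpolys n" unfolding A_def using xs bpolys_bvar by (intro bpolys_bprod_list) auto
  have Bb: "B \<in> bpolys n" unfolding B_def using xs img_Bm by (intro bpolys_bprod_list) auto
  have ab: "bvar i \<in> bpolys n" "img i \<in> bpolys n" using i bpolys_bvar img_Bm by auto
  have AB: "badd A B \<in> I" unfolding A_def B_def using Cons.IH xs by blast
  have t1: "bmul (bvar i) (badd A B) \<in> I" by (rule bidealD(4)[OF ideal AB ab(1)])
  have t2: "bmul B (badd (bvar i) (img i)) \<in> I" by (rule bidealD(4)[OF ideal img_I[OF i] Bb])
  have "bmul B (badd (bvar i) (img i)) = bmul (badd (bvar i) (img i)) B"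
    using bmul_comm[OF Bb bpolys_badd[OF ab]] .
  then have t2': "bmul (badd (bvar i) (img i)) B \<in> I" using t2 by simp
  have "badd (bmul (bvar i) A) (bmul (img i) B) = badd (bmul (bvar i) (badd A B)) (bmul (badd (bvar i) (img i)) B)"
    by (rule telescope[OF ab Ab Bb])
  also have "\<dots> \<in> I" by (rule bidealD(3)[OF ideal t1 t2'])
  finally show ?case unfolding A_def B_def bprod_list_def by simp
qed

lemma single_I: "t \<subseteq> {..<n} \<Longrightarrow> badd {t} (bprod_list (map img (sorted_list_of_set t))) \<in> I"
proof -
  assume t: "t \<subseteq> {..<n}"
  have ft: "finite t" using t finite_subset by blast
  have s: "set (sorted_list_of_set t) = t" using ft by simp
  have "bprod_list (map bvar (sorted_list_of_set t)) = {t}" using bprod_bvar[of "sorted_list_of_set t" n] s t by simp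
  then show ?thesis using tel[of "sorted_list_of_set t"] s t by simp
qed

lemma phi_I_aux: "finite p \<Longrightarrow> p \<subseteq> Pow {..<n} \<Longrightarrow> badd p (phi p) \<in> I"
proof (induction p rule: finite_induct)
  case empty
  have "phi {} = {}" unfolding phi_def bsubst_def bsum_empty ..
  then have "badd {} (phi {}) = bzero" by (simp add: badd_def bzero_def)
  then show ?case using bidealD(2)[OF ideal] by simp
next
  case (insert t p)
  define G where "G t = bprod_list (map img (sorted_list_of_set t))" for t
  have "phi (insert t p) = badd (G t) (phi p)" unfolding phi_def bsubst_def G_def
    by (rule bsum_insert[OF insert(1,2)])
  then have e: "badd (insert t p) (phi (insert t p)) = badd (badd {t} (G t)) (badd p (phi p))"
    using badd_ins[OF insert(2)] by simp
  have "badd {t} (G t) \<in> I" unfolding G_def using single_I insert.prems by blast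
  moreover have "badd p (phi p) \<in> I" using insert.IH insert.prems by blast
  ultimately show ?case unfolding e by (rule bidealD(3)[OF ideal])
qed

lemma phi_I: "p \<in> bpolys n \<Longrightarrow> badd p (phi p) \<in> I"
  using phi_I_aux bpolys_finite unfolding bpolys_def by blast

end

theorem proposition6p2:
  fixes n s :: nat and I :: "bpoly set" and z :: "nat \<Rightarrow> nat"
    and \<sigma> :: "(nat \<Rightarrow> nat) \<Rightarrow> (nat \<Rightarrow> nat) \<Rightarrow> bool"
    and f h :: "nat \<Rightarrow> bpoly"
  assumes ideal: "bideal n I" and proper: "bone \<notin> I"
    and z_inj: "inj_on z {..<s}" and z_range: "\<forall>j<s. z j < n"
    and sigma: "term_ordering n \<sigma>"
    and sep: "coherently_Z_separating n \<sigma> I s z f"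
    and h_def: "\<forall>j<s. h j = badd (f j) (bvar (z j))"
  shows
    "((\<exists>G. is_reduced_boolean_gb n \<sigma> I G) \<and>
     (\<forall>G. is_reduced_boolean_gb n \<sigma> I G \<longrightarrow>
        (\<exists>ht :: nat \<Rightarrow> bpoly. \<exists>gs :: bpoly list.
           (\<forall>j<s. ht j \<in> bsubring n (z ` {..<s})) \<and>
           set gs \<subseteq> bsubring n (z ` {..<s}) \<and>
           G = {badd (bvar (z j)) (ht j) | j. j < s} \<union> set gs))) \<and>
    (let Bm = bsubring n (z ` {..<s});
         Im = I \<inter> Bm;
         \<phi> = bsubst (\<lambda>i. if i \<in> z ` {..<s} then h (THE j. j < s \<and> z j = i) else bvar i)
     in (\<forall>p\<in>bpolys n. \<phi> p \<in> Bm) \<and>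
        (\<forall>p\<in>bpolys n. \<forall>q\<in>bpolys n. \<phi> (badd p q) = badd (\<phi> p) (\<phi> q)
                                    \<and> \<phi> (bmul p q) = bmul (\<phi> p) (\<phi> q)) \<and>
        \<phi> bone = bone \<and>
        (\<forall>p\<in>bpolys n. \<forall>q\<in>bpolys n. badd p q \<in> I \<longrightarrow> badd (\<phi> p) (\<phi> q) \<in> Im) \<and>
        (\<forall>p\<in>bpolys n. \<forall>q\<in>bpolys n. badd (\<phi> p) (\<phi> q) \<in> Im \<longrightarrow> badd p q \<in> I) \<and>
        (\<forall>g\<in>Bm. \<exists>p\<in>bpolys n. badd (\<phi> p) g \<in> Im)) \<and>
    (\<forall>\<tau>. elimination_ordering n \<tau> (z ` {..<s}) \<longrightarrow>
        bideal_gen n {bvar (z j) | j. j < s} \<subseteq> bLT_ideal n \<tau> I)"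
proof -
  interpret bset n I \<sigma> using ideal proper sigma by unfold_locales
  note F = fj_facts[OF ideal sigma sep z_range]
  have zL: "\<forall>j<s. {z j} \<in> L"
  proof (intro allI impI)
    fix j assume j: "j < s"
    show "{z j} \<in> L" using LT_in_L[OF F(1)[OF j] F(6)[OF j]] F(5)[OF j] by simp
  qed
  have A1: "\<exists>G. is_reduced_boolean_gb n \<sigma> I G" by (rule GB_exists)
  have A2: "\<forall>G. is_reduced_boolean_gb n \<sigma> I G \<longrightarrow>
        (\<exists>ht :: nat \<Rightarrow> bpoly. \<exists>gs :: bpoly list.
           (\<forall>j<s. ht j \<in> bsubring n (z ` {..<s})) \<and>
           set gs \<subseteq> bsubring n (z ` {..<s}) \<and>
           G = {badd (bvar (z j)) (ht j) | j. j < s} \<union> set gs)"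
    using GB_structure[OF z_range zL] by blast
  have hI: "\<forall>j<s. badd (bvar (z j)) (h j) \<in> I"
  proof (intro allI impI)
    fix j assume j: "j < s"
    have "badd (bvar (z j)) (h j) = badd (bvar (z j)) (badd (bvar (z j)) (f j))"
      using h_def j badd_comm by metis
    also have "\<dots> = f j" by (rule badd_cancel)
    finally show "badd (bvar (z j)) (h j) \<in> I" using F(1)[OF j] by simp
  qed
  have hB: "\<forall>j<s. h j \<in> bsubring n (z ` {..<s})"
  proof (intro allI impI)
    fix j assume j: "j < s"
    have hb: "h j \<in> bpolys n" using h_def j bpolys_badd[OF F(2)[OF j] bpolys_bvar] z_range by simp
    have "t \<inter> z ` {..<s} = {}" if t: "t \<in> h j" for t
    proof -
      have "t \<in> f j" "t \<noteq> {z j}" using t h_def j F(3)[OF j] unfolding badd_def bvar_def by auto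
      then show ?thesis using F(4)[OF j] by blast
    qed
    then show "h j \<in> bsubring n (z ` {..<s})" unfolding bsubring_def using hb by blast
  qed
  interpret zsub n I s z h using ideal z_inj z_range hI hB by unfold_locales
  have imgE: "(\<lambda>i. if i \<in> z ` {..<s} then h (THE j. j < s \<and> z j = i) else bvar i) = img"
    by (rule ext) (simp add: img_def)
  have phiE: "bsubst (\<lambda>i. if i \<in> z ` {..<s} then h (THE j. j < s \<and> z j = i) else bvar i) = phi"
    unfolding imgE phi_def ..
  have B1: "\<forall>p\<in>bpolys n. phi p \<in> bsubring n (z ` {..<s})"
  proof
    fix p assume p: "p \<in> bpolys n"
    show "phi p \<in> bsubring n (z ` {..<s})" using phi_Bm[OF p] unfolding Zs_def .
  qed
  have B2: "\<forall>p\<in>bpolys n. \<forall>q\<in>bpolys n. phi (badd p q) = badd (phi p) (phi q) \<and> phi (bmul p q) = bmul (phi p) (phi q)"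
    using phi_badd phi_bmul by blast
  have B4: "\<forall>p\<in>bpolys n. \<forall>q\<in>bpolys n. badd p q \<in> I \<longrightarrow> badd (phi p) (phi q) \<in> I \<inter> bsubring n (z ` {..<s})"
  proof (intro ballI impI)
    fix p q assume p: "p \<in> bpolys n" and q: "q \<in> bpolys n" and pq: "badd p q \<in> I"
    define r where "r = badd p q"
    have rb: "r \<in> bpolys n" unfolding r_def by (rule bpolys_badd[OF p q])
    have e: "badd (phi p) (phi q) = phi r" unfolding r_def using phi_badd[OF p q] by simp
    have rI: "r \<in> I" using pq r_def by simp
    have "badd r (badd r (phi r)) \<in> I"
      by (rule bidealD(3)[OF ideal rI phi_I[OF rb]])
    then have "phi r \<in> I" unfolding badd_cancel .
    moreover have "phi r \<in> bsubring n (z ` {..<s})" using phi_Bm[OF rb] unfolding Zs_def .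
    ultimately show "badd (phi p) (phi q) \<in> I \<inter> bsubring n (z ` {..<s})" unfolding e by blast
  qed
  have B5: "\<forall>p\<in>bpolys n. \<forall>q\<in>bpolys n. badd (phi p) (phi q) \<in> I \<inter> bsubring n (z ` {..<s}) \<longrightarrow> badd p q \<in> I"
  proof (intro ballI impI)
    fix p q assume p: "p \<in> bpolys n" and q: "q \<in> bpolys n"
      and m: "badd (phi p) (phi q) \<in> I \<inter> bsubring n (z ` {..<s})"
    have "badd (phi q) q = badd q (phi q)" by (rule badd_comm)
    then have q': "badd (phi q) q \<in> I" using phi_I[OF q] by simp
    have m1: "badd (phi p) (phi q) \<in> I" using m by blast
    have "badd (badd (phi p) (phi q)) (badd (phi q) q) \<in> I"
      by (rule bidealD(3)[OF ideal m1 q'])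
    then have "badd (badd p (phi p)) (badd (badd (phi p) (phi q)) (badd (phi q) q)) \<in> I"
      by (rule bidealD(3)[OF ideal phi_I[OF p]])
    then show "badd p q \<in> I" by (simp only: badd_split[of p q "phi p" "phi q", symmetric])
  qed
  have B6: "\<forall>g\<in>bsubring n (z ` {..<s}). \<exists>p\<in>bpolys n. badd (phi p) g \<in> I \<inter> bsubring n (z ` {..<s})"
  proof
    fix g assume g: "g \<in> bsubring n (z ` {..<s})"
    then have gZ: "g \<in> bsubring n Zs" unfolding Zs_def .
    have gb: "g \<in> bpolys n" and ga: "avoids Zs g" using gZ unfolding bsubring_iff by simp_all
    have "badd (phi g) g = badd g (phi g)" by (rule badd_comm)
    then have "badd (phi g) g \<in> I" using phi_I[OF gb] by simp
    moreover have "badd (phi g) g \<in> bsubring n (z ` {..<s})"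
    proof -
      have pZ: "phi g \<in> bsubring n Zs" by (rule phi_Bm[OF gb])
      then have pb: "phi g \<in> bpolys n" and pa: "avoids Zs (phi g)" unfolding bsubring_iff by simp_all
      have "badd (phi g) g \<in> bsubring n Zs" unfolding bsubring_iff
        using bpolys_badd[OF pb gb] avoids_badd[OF pa ga] by simp
      then show ?thesis unfolding Zs_def .
    qed
    ultimately show "\<exists>p\<in>bpolys n. badd (phi p) g \<in> I \<inter> bsubring n (z ` {..<s})" using gb by blast
  qed
  have C: "\<forall>\<tau>. elimination_ordering n \<tau> (z ` {..<s}) \<longrightarrow>
        bideal_gen n {bvar (z j) | j. j < s} \<subseteq> bLT_ideal n \<tau> I"
    using part_c[OF ideal sigma sep z_range] by blast
  show ?thesis unfolding Let_def phiE using A1 A2 B1 B2 phi_bone B4 B5 B6 C by blast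
qed

end
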